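(* Let $(V,\{\nu_n\})$ be an $L^\infty$-MOS with unitization $(V_1,\{u_n\})$. For every $n$, $A\in M_n(V)_{sa}$ and $X\in(M_n)_{sa}$, the set $\{t>0: X_t\gg0,\ \nu_n(X_t^{-1/2}AX_t^{-1/2})\le1\}$ is nonempty, so $u_n(A,X)$ is a well-defined nonnegative real number. Moreover, for $B\in M_k(V)_{sa}$, $Y\in(M_k)_{sa}$ and $Z\in M_{n,k}$: $u_{n+k}((A\oplus B,X\oplus Y))=\max\{u_n(A,X),u_k(B,Y)\}$ and $u_k(Z^*AZ,Z^*XZ)\le\|Z\|^2u_n(A,X)$.
   Context: A gauge on a real vector space is a map $\nu$ into $[0,\infty)$ with $\nu(x+y)\le\nu(x)+\nu(y)$, $\nu(tx)=t\nu(x)$ ($t>0$); it is proper if $\nu(x)=\nu(-x)=0$ implies $x=0$. An $L^\infty$-matricially ordered space ($L^\infty$-MOS) is a complex $*$-vector space $V$ (with $M_n(V)$ carrying $(x_{ij})^*=(x_{ji}^* )$, and $M_n(V)_{sa}$ the self-adjoint part) together with proper gauges $\nu_n:M_n(V)_{sa}\to[0,\infty)$ such that $\nu_k(X^*AX)\le\|X\|^2\nu_n(A)$ for scalar $X\in M_{n,k}$, and $\nu_{n+k}(A\oplus B)=\max\{\nu_n(A),\nu_k(B)\}$. Unitization: $V_1=V\oplus\mathbb{C}$ with $M_{n,m}(V_1)$ identified with $M_{n,m}(V)\oplus M_{n,m}$ and $(A,X)^*=(A^*,X^* )$; for $X\in M_n$ set $X_t=tI_n-X$; for a scalar square matrix,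 $Y\gg0$ means $Y$ is positive and invertible; define $u_n(A,X)=\inf\{t>0:X_t\gg0,\ \nu_n(X_t^{-1/2}AX_t^{-1/2})\le1\}$ for $(A,X)\in M_n(V_1)_{sa}$. *)

theory Defs
  imports "Jordan_Normal_Form.Schur_Decomposition"
begin

definition cstar_space :: "(complex \<Rightarrow> 'v::ab_group_add \<Rightarrow> 'v) \<Rightarrow> ('v \<Rightarrow> 'v) \<Rightarrow> bool" where
  "cstar_space sc st \<longleftrightarrow>
     (\<forall>a x y. sc a (x + y) = sc a x + sc a y) \<and>
     (\<forall>a b x. sc (a + b) x = sc a x + sc b x) \<and>
     (\<forall>a b x. sc (a * b) x = sc a (sc b x)) \<and>
     (\<forall>x. sc 1 x = x) \<and>
     (\<forall>x y. st (x + y) = st x + st y) \<and>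
     (\<forall>a x. st (sc a x) = sc (cnj a) (st x)) \<and>
     (\<forall>x. st (st x) = x)"

definition vmat_star :: "('v \<Rightarrow> 'v) \<Rightarrow> 'v mat \<Rightarrow> 'v mat" where
  "vmat_star st A = mat (dim_col A) (dim_row A) (\<lambda>(i,j). st (A $$ (j,i)))"

definition vmat_sa :: "('v \<Rightarrow> 'v) \<Rightarrow> nat \<Rightarrow> 'v mat set" where
  "vmat_sa st n = {A. A \<in> carrier_mat n n \<and> vmat_star st A = A}"

text \<open>Product L A R of scalar matrices L, R with a V-valued matrix A.\<close>
definition vmat_triple :: "(complex \<Rightarrow> 'v::ab_group_add \<Rightarrow> 'v) \<Rightarrow> complex mat \<Rightarrow> 'v mat \<Rightarrow> complex mat \<Rightarrow> 'v mat" where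
  "vmat_triple sc L A R = mat (dim_row L) (dim_col R)
     (\<lambda>(p,q). \<Sum>i<dim_row A. \<Sum>j<dim_col A. sc (L $$ (p,i) * R $$ (j,q)) (A $$ (i,j)))"

definition vmat_rscale :: "(complex \<Rightarrow> 'v \<Rightarrow> 'v) \<Rightarrow> real \<Rightarrow> 'v mat \<Rightarrow> 'v mat" where
  "vmat_rscale sc t A = map_mat (sc (complex_of_real t)) A"

definition proper_gauge_on :: "(complex \<Rightarrow> 'v::ab_group_add \<Rightarrow> 'v) \<Rightarrow> 'v mat set \<Rightarrow> ('v mat \<Rightarrow> real) \<Rightarrow> bool" where
  "proper_gauge_on sc S g \<longleftrightarrow>
     (\<forall>x\<in>S. 0 \<le> g x) \<and>
     (\<forall>x\<in>S. \<forall>y\<in>S. g (x + y) \<le> g x + g y) \<and>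
     (\<forall>x\<in>S. \<forall>t>0. g (vmat_rscale sc t x) = t * g x) \<and>
     (\<forall>x\<in>S. g x = 0 \<and> g (- x) = 0 \<longrightarrow> x = 0\<^sub>m (dim_row x) (dim_col x))"

definition cvec_norm :: "complex vec \<Rightarrow> real" where
  "cvec_norm v = sqrt (\<Sum>i<dim_vec v. (cmod (v $ i))\<^sup>2)"

definition op_norm :: "complex mat \<Rightarrow> real" where
  "op_norm X = Sup {cvec_norm (X *\<^sub>v v) | v. v \<in> carrier_vec (dim_col X) \<and> cvec_norm v \<le> 1}"

definition direct_sum :: "'a::zero mat \<Rightarrow> 'a mat \<Rightarrow> 'a mat" where
  "direct_sum A B = four_block_mat A (0\<^sub>m (dim_row A) (dim_col B)) (0\<^sub>m (dim_row B) (dim_col A)) B"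

definition is_LinfMOS :: "(complex \<Rightarrow> 'v::ab_group_add \<Rightarrow> 'v) \<Rightarrow> ('v \<Rightarrow> 'v) \<Rightarrow> (nat \<Rightarrow> 'v mat \<Rightarrow> real) \<Rightarrow> bool" where
  "is_LinfMOS sc st \<nu> \<longleftrightarrow>
     cstar_space sc st \<and>
     (\<forall>n\<ge>1. proper_gauge_on sc (vmat_sa st n) (\<nu> n)) \<and>
     (\<forall>n\<ge>1. \<forall>k\<ge>1. \<forall>A\<in>vmat_sa st n. \<forall>X\<in>carrier_mat n k.
        \<nu> k (vmat_triple sc (mat_adjoint X) A X) \<le> (op_norm X)\<^sup>2 * \<nu> n A) \<and>
     (\<forall>n\<ge>1. \<forall>k\<ge>1. \<forall>A\<in>vmat_sa st n. \<forall>B\<in>vmat_sa st k.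
        \<nu> (n + k) (direct_sum A B) = max (\<nu> n A) (\<nu> k B))"

definition cmat_sa :: "nat \<Rightarrow> complex mat set" where
  "cmat_sa n = {X. X \<in> carrier_mat n n \<and> mat_adjoint X = X}"

definition cmat_pos :: "nat \<Rightarrow> complex mat \<Rightarrow> bool" where
  "cmat_pos n Y \<longleftrightarrow> Y \<in> cmat_sa n \<and>
     (\<forall>v\<in>carrier_vec n. 0 \<le> Re (\<Sum>i<n. cnj (v $ i) * (Y *\<^sub>v v) $ i))"

definition cmat_pd :: "nat \<Rightarrow> complex mat \<Rightarrow> bool" where
  "cmat_pd n Y \<longleftrightarrow> cmat_pos n Y \<and> invertible_mat Y"

definition cmat_sqrt :: "nat \<Rightarrow> complex mat \<Rightarrow> complex mat" where
  "cmat_sqrt n Y = (THE S. cmat_pos n S \<and> S * S = Y)"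

definition cmat_inv :: "nat \<Rightarrow> complex mat \<Rightarrow> complex mat" where
  "cmat_inv n Y = (THE Z. Z \<in> carrier_mat n n \<and> Y * Z = 1\<^sub>m n \<and> Z * Y = 1\<^sub>m n)"

definition cmat_invsqrt :: "nat \<Rightarrow> complex mat \<Rightarrow> complex mat" where
  "cmat_invsqrt n Y = cmat_sqrt n (cmat_inv n Y)"

definition shiftm :: "nat \<Rightarrow> real \<Rightarrow> complex mat \<Rightarrow> complex mat" where
  "shiftm n t X = complex_of_real t \<cdot>\<^sub>m 1\<^sub>m n - X"

definition unit_set :: "(complex \<Rightarrow> 'v::ab_group_add \<Rightarrow> 'v) \<Rightarrow> (nat \<Rightarrow> 'v mat \<Rightarrow> real) \<Rightarrow> nat \<Rightarrow> 'v mat \<Rightarrow> complex mat \<Rightarrow> real set" where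
  "unit_set sc \<nu> n A X = {t. t > 0 \<and> cmat_pd n (shiftm n t X) \<and>
      \<nu> n (vmat_triple sc (cmat_invsqrt n (shiftm n t X)) A (cmat_invsqrt n (shiftm n t X))) \<le> 1}"

definition unit_gauge :: "(complex \<Rightarrow> 'v::ab_group_add \<Rightarrow> 'v) \<Rightarrow> (nat \<Rightarrow> 'v mat \<Rightarrow> real) \<Rightarrow> nat \<Rightarrow> 'v mat \<Rightarrow> complex mat \<Rightarrow> real" where
  "unit_gauge sc \<nu> n A X = Inf (unit_set sc \<nu> n A X)"

end

theory Submission
  imports Defs "Jordan_Normal_Form.Spectral_Radius"
begin


lemma adj_eq: "mat_adjoint (A::complex mat) = mat (dim_col A) (dim_row A) (\<lambda>(i,j). cnj (A $$ (j,i)))"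
  by (rule eq_matI, auto simp: mat_adjoint_def mat_of_rows_def)

lemma adj_carrier[simp]: "(A::complex mat) \<in> carrier_mat m n \<Longrightarrow> mat_adjoint A \<in> carrier_mat n m"
  by (auto simp: adj_eq)

lemma adj_dims[simp]: "dim_row (mat_adjoint (A::complex mat)) = dim_col A" "dim_col (mat_adjoint (A::complex mat)) = dim_row A"
  by (auto simp: adj_eq)

lemma adj_index[simp]: "i < dim_col A \<Longrightarrow> j < dim_row A \<Longrightarrow> mat_adjoint (A::complex mat) $$ (i,j) = cnj (A $$ (j,i))"
  by (auto simp: adj_eq)

lemma adj_adj[simp]: "mat_adjoint (mat_adjoint A) = (A::complex mat)"
  by (rule eq_matI, auto)

lemma mult_entry: "A \<in> carrier_mat m n \<Longrightarrow> B \<in> carrier_mat n p \<Longrightarrow> i < m \<Longrightarrow> j < p \<Longrightarrow>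
  (A * B) $$ (i,j) = (\<Sum>l<n. A $$ (i,l) * B $$ (l,j))"
  by (auto simp: scalar_prod_def lessThan_atLeast0 intro!: sum.cong)

lemma mv_entry: "A \<in> carrier_mat m n \<Longrightarrow> v \<in> carrier_vec n \<Longrightarrow> i < m \<Longrightarrow>
  (A *\<^sub>v v) $ i = (\<Sum>l<n. A $$ (i,l) * v $ l)"
  by (auto simp: scalar_prod_def lessThan_atLeast0 intro!: sum.cong)

lemma adj_mult: assumes "(A::complex mat) \<in> carrier_mat m n" "B \<in> carrier_mat n p"
  shows "mat_adjoint (A * B) = mat_adjoint B * mat_adjoint A"
proof (rule eq_matI)
  fix i j assume ij: "i < dim_row (mat_adjoint B * mat_adjoint A)" "j < dim_col (mat_adjoint B * mat_adjoint A)"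
  hence i: "i < p" and j: "j < m" using assms by auto
  have "mat_adjoint (A * B) $$ (i,j) = cnj ((A*B) $$ (j,i))" using assms i j by auto
  also have "\<dots> = (\<Sum>l<n. cnj (A $$ (j,l)) * cnj (B $$ (l,i)))" using assms i j by (simp add: mult_entry[of A m n B p] cnj_sum del: index_mult_mat)
  also have "\<dots> = (mat_adjoint B * mat_adjoint A) $$ (i,j)"
    using assms i j by (subst mult_entry[of _ p n _ m], auto intro!: sum.cong)
  finally show "mat_adjoint (A * B) $$ (i, j) = (mat_adjoint B * mat_adjoint A) $$ (i, j)" .
qed (use assms in auto)

lemma adj_add: assumes "(A::complex mat) \<in> carrier_mat m n" "B \<in> carrier_mat m n"
  shows "mat_adjoint (A + B) = mat_adjoint A + mat_adjoint B"
  by (rule eq_matI, use assms in auto)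

lemma adj_minus: assumes "(A::complex mat) \<in> carrier_mat m n" "B \<in> carrier_mat m n"
  shows "mat_adjoint (A - B) = mat_adjoint A - mat_adjoint B"
  by (rule eq_matI, use assms in auto)

lemma adj_one[simp]: "mat_adjoint (1\<^sub>m n) = (1\<^sub>m n :: complex mat)"
  by (rule eq_matI, auto)

lemma adj_zero[simp]: "mat_adjoint (0\<^sub>m n m) = (0\<^sub>m m n :: complex mat)"
  by (rule eq_matI, auto)

lemma adj_smult_real: "mat_adjoint (complex_of_real r \<cdot>\<^sub>m A) = complex_of_real r \<cdot>\<^sub>m mat_adjoint (A::complex mat)"
  by (rule eq_matI, auto)

definition ip :: "complex vec \<Rightarrow> complex vec \<Rightarrow> complex" where
  "ip x y = (\<Sum>i<dim_vec x. cnj (x $ i) * y $ i)"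

definition nsq :: "complex vec \<Rightarrow> real" where
  "nsq x = (\<Sum>i<dim_vec x. (cmod (x $ i))\<^sup>2)"

definition qf :: "complex mat \<Rightarrow> complex vec \<Rightarrow> complex" where
  "qf M v = ip v (M *\<^sub>v v)"

lemma nsq_nonneg: "0 \<le> nsq x" unfolding nsq_def by (auto intro: sum_nonneg)

lemma ip_self: "ip x x = complex_of_real (nsq x)"
  unfolding ip_def nsq_def of_real_sum
  by (rule sum.cong) (simp_all add: mult.commute[of "cnj _"] complex_norm_square[symmetric])

lemma ip_cnj: "x \<in> carrier_vec n \<Longrightarrow> y \<in> carrier_vec n \<Longrightarrow> cnj (ip x y) = ip y x"
  unfolding ip_def by (auto simp: cnj_sum mult.commute)

lemma ip_add_right: "x \<in> carrier_vec n \<Longrightarrow> y \<in> carrier_vec n \<Longrightarrow> z \<in> carrier_vec n \<Longrightarrow>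
  ip x (y + z) = ip x y + ip x z"
  unfolding ip_def by (auto simp: sum.distrib distrib_left)

lemma ip_add_left: "x \<in> carrier_vec n \<Longrightarrow> y \<in> carrier_vec n \<Longrightarrow> z \<in> carrier_vec n \<Longrightarrow>
  ip (y + z) x = ip y x + ip z x"
  unfolding ip_def by (auto simp: sum.distrib distrib_right)

lemma ip_minus_right: "x \<in> carrier_vec n \<Longrightarrow> y \<in> carrier_vec n \<Longrightarrow> z \<in> carrier_vec n \<Longrightarrow>
  ip x (y - z) = ip x y - ip x z"
  unfolding ip_def by (auto simp: sum_subtractf right_diff_distrib)

lemma ip_minus_left: "x \<in> carrier_vec n \<Longrightarrow> y \<in> carrier_vec n \<Longrightarrow> z \<in> carrier_vec n \<Longrightarrow>
  ip (y - z) x = ip y x - ip z x"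
  unfolding ip_def by (auto simp: sum_subtractf left_diff_distrib)

lemma ip_smult_right: "x \<in> carrier_vec n \<Longrightarrow> y \<in> carrier_vec n \<Longrightarrow> ip x (c \<cdot>\<^sub>v y) = c * ip x y"
  unfolding ip_def by (auto simp: sum_distrib_left intro!: sum.cong)

lemma ip_smult_left: "x \<in> carrier_vec n \<Longrightarrow> y \<in> carrier_vec n \<Longrightarrow> ip (c \<cdot>\<^sub>v y) x = cnj c * ip y x"
  unfolding ip_def by (auto simp: sum_distrib_left intro!: sum.cong)

lemma ip_adj: assumes L: "L \<in> carrier_mat m n" and w: "w \<in> carrier_vec m" and v: "v \<in> carrier_vec n"
  shows "ip v (mat_adjoint L *\<^sub>v w) = ip (L *\<^sub>v v) w"
proof -
  have "ip v (mat_adjoint L *\<^sub>v w) = (\<Sum>i<n. cnj (v $ i) * (\<Sum>l<m. cnj (L $$ (l,i)) * w $ l))"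
    unfolding ip_def using assms mv_entry[OF adj_carrier[OF L] w] by (auto simp del: index_mult_mat_vec intro!: sum.cong)
  also have "\<dots> = (\<Sum>i<n. \<Sum>l<m. cnj (v $ i) * cnj (L $$ (l,i)) * w $ l)"
    by (simp add: sum_distrib_left mult.assoc)
  also have "\<dots> = (\<Sum>l<m. \<Sum>i<n. cnj (v $ i) * cnj (L $$ (l,i)) * w $ l)"
    by (rule sum.swap)
  also have "\<dots> = (\<Sum>l<m. cnj (\<Sum>i<n. L $$ (l,i) * v $ i) * w $ l)"
    unfolding cnj_sum sum_distrib_right by (rule sum.cong, simp, rule sum.cong, simp_all)
  also have "\<dots> = ip (L *\<^sub>v v) w"
    unfolding ip_def using assms mv_entry[OF L v] by (auto simp del: index_mult_mat_vec simp: cnj_sum intro!: sum.cong)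
  finally show ?thesis .
qed

lemma qf_conj: assumes L: "L \<in> carrier_mat m n" and M: "M \<in> carrier_mat m m" and v: "v \<in> carrier_vec n"
  shows "qf (mat_adjoint L * M * L) v = qf M (L *\<^sub>v v)"
proof -
  have "(mat_adjoint L * M * L) *\<^sub>v v = (mat_adjoint L * M) *\<^sub>v (L *\<^sub>v v)"
    using assms by (intro assoc_mult_mat_vec) auto
  also have "\<dots> = mat_adjoint L *\<^sub>v (M *\<^sub>v (L *\<^sub>v v))"
    using assms by (intro assoc_mult_mat_vec) auto
  finally have e: "(mat_adjoint L * M * L) *\<^sub>v v = mat_adjoint L *\<^sub>v (M *\<^sub>v (L *\<^sub>v v))" .
  show ?thesis unfolding qf_def e 
    by (rule ip_adj[OF L], use assms in auto)
qed

lemma qf_herm_real: assumes "M \<in> carrier_mat n n" "mat_adjoint M = M" "v \<in> carrier_vec n"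
  shows "qf M v = complex_of_real (Re (qf M v))"
proof -
  have "cnj (qf M v) = ip (M *\<^sub>v v) v" unfolding qf_def using assms by (intro ip_cnj[of _ n]) auto
  also have "\<dots> = ip v (mat_adjoint M *\<^sub>v v)" using ip_adj[of M n n v v] assms by simp
  also have "\<dots> = qf M v" unfolding qf_def using assms by simp
  finally have "cnj (qf M v) = qf M v" .
  hence "Im (qf M v) = 0" by (metis cnj.simps(2) neg_equal_zero)
  thus ?thesis by (simp add: complex_eq_iff)
qed

lemma qf_add: "A \<in> carrier_mat n n \<Longrightarrow> B \<in> carrier_mat n n \<Longrightarrow> v \<in> carrier_vec n \<Longrightarrow>
  qf (A + B) v = qf A v + qf B v"
  unfolding qf_def by (simp add: add_mult_distrib_mat_vec ip_add_right[of _ n])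

lemma qf_minus: "A \<in> carrier_mat n n \<Longrightarrow> B \<in> carrier_mat n n \<Longrightarrow> v \<in> carrier_vec n \<Longrightarrow>
  qf (A - B) v = qf A v - qf B v"
  unfolding qf_def by (simp add: minus_mult_distrib_mat_vec ip_minus_right[of _ n])

lemma smult_mat_vec: "A \<in> carrier_mat m n \<Longrightarrow> v \<in> carrier_vec n \<Longrightarrow> (c \<cdot>\<^sub>m A) *\<^sub>v v = c \<cdot>\<^sub>v (A *\<^sub>v v)"
  by (rule eq_vecI, auto simp: scalar_prod_def sum_distrib_left intro!: sum.cong simp: mult.assoc)

lemma qf_smult: "A \<in> carrier_mat n n \<Longrightarrow> v \<in> carrier_vec n \<Longrightarrow> qf (c \<cdot>\<^sub>m A) v = c * qf A v"
  unfolding qf_def by (simp add: ip_smult_right[of _ n] smult_mat_vec)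

lemma qf_one: "v \<in> carrier_vec n \<Longrightarrow> qf (1\<^sub>m n) v = complex_of_real (nsq v)"
  unfolding qf_def by (simp add: ip_self)

lemma nsq_qf: assumes "L \<in> carrier_mat m n" "v \<in> carrier_vec n"
  shows "complex_of_real (nsq (L *\<^sub>v v)) = qf (mat_adjoint L * L) v"
proof -
  have "mat_adjoint L * 1\<^sub>m m = mat_adjoint L" using assms by (intro right_mult_one_mat) auto
  hence "qf (mat_adjoint L * L) v = qf (mat_adjoint L * 1\<^sub>m m * L) v" by simp
  also have "\<dots> = qf (1\<^sub>m m) (L *\<^sub>v v)" using assms by (intro qf_conj, auto)
  also have "\<dots> = complex_of_real (nsq (L *\<^sub>v v))" using assms by (intro qf_one) auto
  finally show ?thesis by simp
qed

lemma cmat_pos_qf: "cmat_pos n Y \<longleftrightarrow> Y \<in> cmat_sa n \<and> (\<forall>v\<in>carrier_vec n. 0 \<le> Re (qf Y v))"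
  unfolding cmat_pos_def qf_def ip_def by auto

lemma cvec_norm_nsq: "cvec_norm v = sqrt (nsq v)"
  unfolding cvec_norm_def nsq_def by simp


lemma cscalar_ip: "x \<in> carrier_vec n \<Longrightarrow> y \<in> carrier_vec n \<Longrightarrow> x \<bullet>c y = ip y x"
  unfolding ip_def scalar_prod_def by (auto simp: lessThan_atLeast0 mult.commute intro!: sum.cong)

lemma nsq_zero: "x \<in> carrier_vec n \<Longrightarrow> nsq x = 0 \<Longrightarrow> x = 0\<^sub>v n"
proof -
  assume x: "x \<in> carrier_vec n" and z: "nsq x = 0"
  have "\<forall>i\<in>{..<n}. (cmod (x $ i))\<^sup>2 = 0"
    using z x unfolding nsq_def by (subst sum_nonneg_eq_0_iff[symmetric]) auto
  thus ?thesis using x by (intro eq_vecI) auto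
qed

lemma ip_smult_both: "x \<in> carrier_vec n \<Longrightarrow> y \<in> carrier_vec n \<Longrightarrow>
  ip (complex_of_real a \<cdot>\<^sub>v x) (complex_of_real b \<cdot>\<^sub>v y) = complex_of_real (a * b) * ip x y"
  by (simp add: ip_smult_left[of _ n] ip_smult_right[of _ n])

lemma onb_first:
  assumes u: "u \<in> carrier_vec n" and un: "nsq u = 1"
  shows "\<exists>us. length us = n \<and> set us \<subseteq> carrier_vec n \<and>
     (\<forall>i<n. \<forall>j<n. ip (us!i) (us!j) = (if i = j then 1 else 0)) \<and> us ! 0 = u"
proof -
  have u0: "u \<noteq> 0\<^sub>v n" using un u unfolding nsq_def by auto
  interpret cof_vec_space n "TYPE(complex)" .
  define b where "b = basis_completion u"
  from basis_completion[OF u u0, folded b_def]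
  have dist_b: "distinct b" and indep: "\<not> lin_dep (set b)" and bc: "set b \<subseteq> carrier_vec n"
    and hdb: "hd b = u" and len_b: "length b = n" by auto
  have n: "n > 0" using u0 u by (cases n) auto
  from hdb len_b n obtain vs where bv: "b = u # vs" by (cases b, auto)
  define ws where "ws = gram_schmidt n b"
  from gram_schmidt_result[OF bc dist_b indep refl, folded ws_def]
  have ws: "set ws \<subseteq> carrier_vec n" "corthogonal ws" "length ws = n"
    by (auto simp: len_b)
  from gram_schmidt_hd[OF u, of vs, folded bv] have hdws: "hd ws = u" unfolding ws_def .
  have ws0: "ws ! 0 = u" using hdws ws(3) n by (metis hd_conv_nth length_greater_0_conv)
  define us where "us = map (\<lambda>w. complex_of_real (1 / sqrt (nsq w)) \<cdot>\<^sub>v w) ws"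
  have wsc: "\<And>i. i < n \<Longrightarrow> ws ! i \<in> carrier_vec n" using ws by auto
  have wsip: "\<And>i j. i < n \<Longrightarrow> j < n \<Longrightarrow> ip (ws!i) (ws!j) = 0 \<longleftrightarrow> i \<noteq> j"
    using corthogonalD[OF ws(2)] ws(3) wsc cscalar_ip by metis
  have pos: "\<And>i. i < n \<Longrightarrow> nsq (ws ! i) > 0"
  proof -
    fix i assume i: "i < n"
    have "ip (ws!i) (ws!i) \<noteq> 0" using wsip[OF i i] by simp
    hence "nsq (ws!i) \<noteq> 0" by (simp add: ip_self)
    thus "nsq (ws!i) > 0" using nsq_nonneg[of "ws!i"] by linarith
  qed
  have "\<forall>i<n. \<forall>j<n. ip (us!i) (us!j) = (if i = j then 1 else 0)"
  proof (intro allI impI)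
    fix i j assume i: "i < n" and j: "j < n"
    have ui: "us!i = complex_of_real (1/sqrt(nsq(ws!i))) \<cdot>\<^sub>v ws!i" unfolding us_def using i ws(3) by simp
    have uj: "us!j = complex_of_real (1/sqrt(nsq(ws!j))) \<cdot>\<^sub>v ws!j" unfolding us_def using j ws(3) by simp
    have "ip (us!i) (us!j) = complex_of_real (1 / sqrt (nsq (ws!i)) * (1 / sqrt (nsq (ws!j)))) * ip (ws!i) (ws!j)"
      unfolding ui uj by (rule ip_smult_both[OF wsc[OF i] wsc[OF j]])
    also have "\<dots> = (if i = j then 1 else 0)"
    proof (cases "i = j")
      case True
      have "ip (ws!i) (ws!i) = complex_of_real (nsq (ws!i))" by (rule ip_self)
      moreover have "1 / sqrt (nsq (ws!i)) * (1 / sqrt (nsq (ws!i))) * nsq (ws!i) = 1"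
        using pos[OF i] by (simp add: field_simps)
      ultimately show ?thesis using True by (metis of_real_1 of_real_mult)
    next
      case False thus ?thesis using wsip[OF i j] by simp
    qed
    finally show "ip (us!i) (us!j) = (if i = j then 1 else 0)" .
  qed
  moreover have "us ! 0 = u" unfolding us_def using n ws(3) ws0 un by simp
  moreover have "set us \<subseteq> carrier_vec n" unfolding us_def using ws by auto
  moreover have "length us = n" unfolding us_def using ws by auto
  ultimately show ?thesis by blast
qed

lemma adj_mid_entry: assumes W: "W \<in> carrier_mat m k" and M: "M \<in> carrier_mat m m"
  and i: "i < k" and j: "j < k"
  shows "(mat_adjoint W * M * W) $$ (i,j) = ip (col W i) (M *\<^sub>v col W j)"
proof -
  have "(mat_adjoint W * M * W) = mat_adjoint W * (M * W)" using W M by (intro assoc_mult_mat) auto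
  hence "(mat_adjoint W * M * W) $$ (i,j) = (\<Sum>l<m. cnj (W $$ (l,i)) * (M * W) $$ (l,j))"
    using W M i j by (simp add: mult_entry[of _ k m _ k] del: index_mult_mat)
  also have "\<dots> = ip (col W i) (M *\<^sub>v col W j)"
    unfolding ip_def using W M i j by (auto intro!: sum.cong)
  finally show ?thesis .
qed

lemma assoc5: assumes "A \<in> carrier_mat N N" "B \<in> carrier_mat N N" "C \<in> carrier_mat N N"
  "D \<in> carrier_mat N N" "E \<in> carrier_mat N N"
  shows "A * B * C * (D * E) = A * (B * C * D) * E"
proof -
  have 1: "A * B * C * (D * E) = (A * B * C * D) * E" by (rule assoc_mult_mat[symmetric], use assms in auto)
  have 2: "A * B * C = A * (B * C)" by (rule assoc_mult_mat, use assms in auto)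
  have 3: "A * (B * C) * D = A * (B * C * D)" by (rule assoc_mult_mat, use assms in auto)
  show ?thesis unfolding 1 unfolding 2 unfolding 3 ..
qed

lemma nsq_smult_real: "nsq (complex_of_real a \<cdot>\<^sub>v v) = a\<^sup>2 * nsq v"
  unfolding nsq_def by (auto simp: sum_distrib_left norm_mult power_mult_distrib intro!: sum.cong)

lemma spectral:
  assumes "H \<in> carrier_mat n n" "mat_adjoint H = H"
  shows "\<exists>U d. U \<in> carrier_mat n n \<and> mat_adjoint U * U = 1\<^sub>m n \<and> U * mat_adjoint U = 1\<^sub>m n \<and>
     mat_adjoint U * H * U = mat n n (\<lambda>(i,j). if i = j then complex_of_real (d i) else 0)"
  using assms
proof (induction n arbitrary: H)
  case 0
  show ?case
    by (rule exI[of _ "1\<^sub>m 0"], rule exI[of _ "\<lambda>_. 0"], insert 0, auto intro!: eq_matI)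
next
  case (Suc n)
  have H: "H \<in> carrier_mat (Suc n) (Suc n)" and Hh: "mat_adjoint H = H" by fact+
  obtain e where "e \<in> spectrum H" using spectrum_non_empty[OF H] by auto
  hence ev: "eigenvalue H e" unfolding spectrum_def by auto
  define v where "v = find_eigenvector H e"
  have "eigenvector H v e" using find_eigenvector[OF H ev] unfolding v_def .
  hence v: "v \<in> carrier_vec (Suc n)" and v0: "v \<noteq> 0\<^sub>v (Suc n)" and Hv: "H *\<^sub>v v = e \<cdot>\<^sub>v v"
    unfolding eigenvector_def using H by auto
  have nv: "nsq v > 0" using nsq_zero[OF v] nsq_nonneg[of v] v0 by force
  define u where "u = complex_of_real (1 / sqrt (nsq v)) \<cdot>\<^sub>v v"
  have u: "u \<in> carrier_vec (Suc n)" unfolding u_def using v by auto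
  have un: "nsq u = 1" unfolding u_def nsq_smult_real using nv by (simp add: power_divide)
  have Hu: "H *\<^sub>v u = e \<cdot>\<^sub>v u" unfolding u_def using H v Hv
    by (simp add: mult_mat_vec[OF H v] smult_smult_assoc mult.commute)
  obtain us where us: "length us = Suc n" "set us \<subseteq> carrier_vec (Suc n)"
     "\<forall>i<Suc n. \<forall>j<Suc n. ip (us!i) (us!j) = (if i = j then 1 else 0)" "us ! 0 = u"
    using onb_first[OF u un] by blast
  have usc: "\<And>j. j < Suc n \<Longrightarrow> us ! j \<in> carrier_vec (Suc n)" using us by auto
  define W where "W = mat_of_cols (Suc n) us"
  have W: "W \<in> carrier_mat (Suc n) (Suc n)" unfolding W_def using us by auto
  have colW: "\<And>j. j < Suc n \<Longrightarrow> col W j = us ! j" unfolding W_def using us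
    by (metis col_mat_of_cols nth_mem subset_code(1))
  have WW: "mat_adjoint W * W = 1\<^sub>m (Suc n)"
  proof (rule eq_matI)
    fix i j assume "i < dim_row (1\<^sub>m (Suc n))" "j < dim_col (1\<^sub>m (Suc n))"
    hence i: "i < Suc n" and j: "j < Suc n" by auto
    have "(mat_adjoint W * W) $$ (i,j) = (mat_adjoint W * 1\<^sub>m (Suc n) * W) $$ (i,j)" using W by simp
    also have "\<dots> = ip (col W i) (1\<^sub>m (Suc n) *\<^sub>v col W j)" by (rule adj_mid_entry[OF W _ i j], auto)
    also have "\<dots> = ip (us!i) (us!j)" using colW i j W usc[OF j] by simp
    finally show "(mat_adjoint W * W) $$ (i,j) = 1\<^sub>m (Suc n) $$ (i,j)" using us(3) i j by simp
  qed (use W in auto)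
  have WW2: "W * mat_adjoint W = 1\<^sub>m (Suc n)"
    by (rule mat_mult_left_right_inverse[OF _ W WW], use W in auto)
  define G where "G = mat_adjoint W * H * W"
  have G: "G \<in> carrier_mat (Suc n) (Suc n)" unfolding G_def using W H by auto
  have Gh: "mat_adjoint G = G"
  proof -
    have "mat_adjoint G = mat_adjoint W * mat_adjoint (mat_adjoint W * H)"
      unfolding G_def by (rule adj_mult[of _ "Suc n" "Suc n" _ "Suc n"], use W H in auto)
    also have "mat_adjoint (mat_adjoint W * H) = mat_adjoint H * W"
      using adj_mult[of "mat_adjoint W" "Suc n" "Suc n" H "Suc n"] W H by simp
    finally show ?thesis unfolding G_def using W H Hh
      by (simp add: assoc_mult_mat[of "mat_adjoint W" "Suc n" "Suc n" H "Suc n" W "Suc n"])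
  qed
  have Gi0: "\<And>i. i < Suc n \<Longrightarrow> G $$ (i,0) = (if i = 0 then e else 0)"
  proof -
    fix i assume i: "i < Suc n"
    have "G $$ (i,0) = ip (col W i) (H *\<^sub>v col W 0)" unfolding G_def by (rule adj_mid_entry[OF W H i], simp)
    also have "\<dots> = ip (us!i) (e \<cdot>\<^sub>v us!0)" using colW[OF i] colW[of 0] us(4) Hu by simp
    also have "\<dots> = e * ip (us!i) (us!0)" using us i by (intro ip_smult_right[of _ "Suc n"]) auto
    finally show "G $$ (i,0) = (if i = 0 then e else 0)" using us(3) i by auto
  qed
  have Gsym: "\<And>i j. i < Suc n \<Longrightarrow> j < Suc n \<Longrightarrow> G $$ (i,j) = cnj (G $$ (j,i))"
    by (metis G Gh adj_index carrier_matD(1) carrier_matD(2))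
  have G0j: "\<And>j. j < Suc n \<Longrightarrow> G $$ (0,j) = (if j = 0 then cnj e else 0)"
  proof -
    fix j assume j: "j < Suc n"
    show "G $$ (0,j) = (if j = 0 then cnj e else 0)" using Gsym[OF _ j, of 0] Gi0[OF j] by auto
  qed
  have ec: "cnj e = e" using G0j[of 0] Gi0[of 0] by simp
  have ereal: "e = complex_of_real (Re e)"
  proof -
    have "e = cnj e" using ec by simp
    hence "Im e = 0" by (metis cnj.simps(2) neg_equal_zero)
    thus ?thesis by (simp add: complex_eq_iff)
  qed
  define H3 where "H3 = mat n n (\<lambda>(i,j). G $$ (Suc i, Suc j))"
  have H3: "H3 \<in> carrier_mat n n" unfolding H3_def by auto
  have H3h: "mat_adjoint H3 = H3" unfolding H3_def
  proof (rule eq_matI)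
    fix i j assume "i < dim_row (mat n n (\<lambda>(i, j). G $$ (Suc i, Suc j)))" "j < dim_col (mat n n (\<lambda>(i, j). G $$ (Suc i, Suc j)))"
    hence i: "i < n" and j: "j < n" by auto
    show "mat_adjoint (mat n n (\<lambda>(i, j). G $$ (Suc i, Suc j))) $$ (i, j) = mat n n (\<lambda>(i, j). G $$ (Suc i, Suc j)) $$ (i, j)"
      using i j Gsym[of "Suc i" "Suc j"] by simp
  qed auto
  obtain U3 d3 where U3: "U3 \<in> carrier_mat n n" and U3a: "mat_adjoint U3 * U3 = 1\<^sub>m n"
    and U3b: "U3 * mat_adjoint U3 = 1\<^sub>m n"
    and U3d: "mat_adjoint U3 * H3 * U3 = mat n n (\<lambda>(i,j). if i = j then complex_of_real (d3 i) else 0)"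
    using Suc.IH[OF H3 H3h] by blast
  define V where "V = four_block_mat (1\<^sub>m 1) (0\<^sub>m 1 n) (0\<^sub>m n 1) U3"
  have V: "V \<in> carrier_mat (Suc n) (Suc n)" unfolding V_def using U3 
    using four_block_carrier_mat[of "1\<^sub>m 1" 1 1 U3 n n] by simp
  have Va: "mat_adjoint V = four_block_mat (1\<^sub>m 1) (0\<^sub>m 1 n) (0\<^sub>m n 1) (mat_adjoint U3)"
    unfolding V_def by (rule eq_matI, use U3 in auto)
  have Gb: "G = four_block_mat (mat 1 1 (\<lambda>_. e)) (0\<^sub>m 1 n) (0\<^sub>m n 1) H3"
  proof (rule eq_matI)
    fix i j assume ij: "i < dim_row (four_block_mat (mat 1 1 (\<lambda>_. e)) (0\<^sub>m 1 n) (0\<^sub>m n 1) H3)"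
      "j < dim_col (four_block_mat (mat 1 1 (\<lambda>_. e)) (0\<^sub>m 1 n) (0\<^sub>m n 1) H3)"
    hence i: "i < Suc n" and j: "j < Suc n" using H3 by auto
    show "G $$ (i,j) = four_block_mat (mat 1 1 (\<lambda>_. e)) (0\<^sub>m 1 n) (0\<^sub>m n 1) H3 $$ (i,j)"
    proof (cases "i = 0")
      case True thus ?thesis using G0j[OF j] j H3 ec by (auto)
    next
      case False
      then obtain i' where i': "i = Suc i'" by (cases i) auto
      show ?thesis
      proof (cases "j = 0")
        case True thus ?thesis using Gi0[OF i] i H3 i' by auto
      next
        case False
        then obtain j' where j': "j = Suc j'" by (cases j) auto
        show ?thesis using i j H3 i' j' unfolding H3_def by auto
      qed
    qed
  qed (use G H3 in auto)
  define U where "U = W * V"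
  have Uc: "U \<in> carrier_mat (Suc n) (Suc n)" unfolding U_def using W V by auto
  have Ua: "mat_adjoint U = mat_adjoint V * mat_adjoint W" unfolding U_def using W V
    by (rule adj_mult)
  have VV: "mat_adjoint V * V = 1\<^sub>m (Suc n)"
  proof -
    have "mat_adjoint V * V = four_block_mat (1\<^sub>m 1 * 1\<^sub>m 1 + 0\<^sub>m 1 n * 0\<^sub>m n 1) (1\<^sub>m 1 * 0\<^sub>m 1 n + 0\<^sub>m 1 n * U3)
       (0\<^sub>m n 1 * 1\<^sub>m 1 + mat_adjoint U3 * 0\<^sub>m n 1) (0\<^sub>m n 1 * 0\<^sub>m 1 n + mat_adjoint U3 * U3)"
      unfolding Va unfolding V_def by (rule mult_four_block_mat, use U3 in auto)
    also have "\<dots> = four_block_mat (1\<^sub>m 1) (0\<^sub>m 1 n) (0\<^sub>m n 1) (1\<^sub>m n)" using U3 U3a by simp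
    also have "\<dots> = 1\<^sub>m (Suc n)" by simp
    finally show ?thesis .
  qed
  have UU: "mat_adjoint U * U = 1\<^sub>m (Suc n)"
  proof -
    have aV: "mat_adjoint V \<in> carrier_mat (Suc n) (Suc n)" and aW: "mat_adjoint W \<in> carrier_mat (Suc n) (Suc n)"
      using V W by auto
    have "mat_adjoint U * U = (mat_adjoint V * mat_adjoint W) * (W * V)" unfolding Ua unfolding U_def ..
    also have "\<dots> = mat_adjoint V * (mat_adjoint W * (W * V))" by (rule assoc_mult_mat[OF aV aW], use V W in auto)
    also have "mat_adjoint W * (W * V) = (mat_adjoint W * W) * V" by (rule assoc_mult_mat[symmetric, OF aW W V])
    also have "mat_adjoint V * ((mat_adjoint W * W) * V) = mat_adjoint V * (mat_adjoint W * W) * V"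
      by (rule assoc_mult_mat[symmetric, OF aV], use W V in auto)
    finally have "mat_adjoint U * U = mat_adjoint V * (mat_adjoint W * W) * V" .
    thus ?thesis using WW VV V by simp
  qed
  have UU2: "U * mat_adjoint U = 1\<^sub>m (Suc n)"
    by (rule mat_mult_left_right_inverse[OF _ Uc UU], use Uc in auto)
  define d where "d = (\<lambda>i. if i = 0 then Re e else d3 (i - 1))"
  have aV: "mat_adjoint V \<in> carrier_mat (Suc n) (Suc n)" and aW: "mat_adjoint W \<in> carrier_mat (Suc n) (Suc n)"
      using V W by auto
  have "mat_adjoint U * H * U = (mat_adjoint V * mat_adjoint W) * H * (W * V)" unfolding Ua unfolding U_def ..
  also have "\<dots> = mat_adjoint V * (mat_adjoint W * H * W) * V"
    by (rule assoc5[OF aV aW H W V])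
  finally have "mat_adjoint U * H * U = mat_adjoint V * G * V" unfolding G_def .
  also have "mat_adjoint V * G * V = mat_adjoint V * (G * V)" by (rule assoc_mult_mat[OF aV G V])
  also have "\<dots> = four_block_mat (mat 1 1 (\<lambda>_. e)) (0\<^sub>m 1 n) (0\<^sub>m n 1) (mat_adjoint U3 * H3 * U3)"
  proof -
    have a3: "mat_adjoint U3 * H3 * U3 = mat_adjoint U3 * (H3 * U3)" using U3 H3 by (intro assoc_mult_mat) auto
    have "G * V = four_block_mat (mat 1 1 (\<lambda>_. e) * 1\<^sub>m 1 + 0\<^sub>m 1 n * 0\<^sub>m n 1) (mat 1 1 (\<lambda>_. e) * 0\<^sub>m 1 n + 0\<^sub>m 1 n * U3)
       (0\<^sub>m n 1 * 1\<^sub>m 1 + H3 * 0\<^sub>m n 1) (0\<^sub>m n 1 * 0\<^sub>m 1 n + H3 * U3)"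
      unfolding Gb V_def by (rule mult_four_block_mat, use U3 H3 in auto)
    also have "\<dots> = four_block_mat (mat 1 1 (\<lambda>_. e)) (0\<^sub>m 1 n) (0\<^sub>m n 1) (H3 * U3)" using U3 H3 by simp
    finally have GV: "G * V = four_block_mat (mat 1 1 (\<lambda>_. e)) (0\<^sub>m 1 n) (0\<^sub>m n 1) (H3 * U3)" .
    have "mat_adjoint V * (G * V) = four_block_mat (1\<^sub>m 1 * mat 1 1 (\<lambda>_. e) + 0\<^sub>m 1 n * 0\<^sub>m n 1) (1\<^sub>m 1 * 0\<^sub>m 1 n + 0\<^sub>m 1 n * (H3 * U3))
       (0\<^sub>m n 1 * mat 1 1 (\<lambda>_. e) + mat_adjoint U3 * 0\<^sub>m n 1) (0\<^sub>m n 1 * 0\<^sub>m 1 n + mat_adjoint U3 * (H3 * U3))"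
      unfolding Va GV by (rule mult_four_block_mat, use U3 H3 in auto)
    also have "\<dots> = four_block_mat (mat 1 1 (\<lambda>_. e)) (0\<^sub>m 1 n) (0\<^sub>m n 1) (mat_adjoint U3 * H3 * U3)"
    proof -
      have c3: "mat_adjoint U3 * (H3 * U3) \<in> carrier_mat n n" using U3 H3 by auto
      show ?thesis unfolding a3 using U3 H3 left_add_zero_mat[OF c3] by simp
    qed
    finally show ?thesis .
  qed
  also have "\<dots> = mat (Suc n) (Suc n) (\<lambda>(i,j). if i = j then complex_of_real (d i) else 0)"
    unfolding U3d by (rule eq_matI, auto simp: d_def ereal[symmetric])
  finally show ?case using Uc UU UU2 by blast
qed


definition dmat :: "nat \<Rightarrow> (nat \<Rightarrow> real) \<Rightarrow> complex mat" where
  "dmat n d = mat n n (\<lambda>(i,j). if i = j then complex_of_real (d i) else 0)"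

lemma dmat_carrier[simp]: "dmat n d \<in> carrier_mat n n" unfolding dmat_def by auto

lemma dmat_adj[simp]: "mat_adjoint (dmat n d) = dmat n d"
  unfolding dmat_def by (rule eq_matI, auto)

lemma dmat_mult: "dmat n a * dmat n b = dmat n (\<lambda>i. a i * b i)"
proof (rule eq_matI)
  fix i j assume "i < dim_row (dmat n (\<lambda>i. a i * b i))" "j < dim_col (dmat n (\<lambda>i. a i * b i))"
  hence i: "i < n" and j: "j < n" by (auto simp: dmat_def)
  have "(dmat n a * dmat n b) $$ (i,j) = (\<Sum>l<n. dmat n a $$ (i,l) * dmat n b $$ (l,j))"
    using i j by (intro mult_entry) auto
  also have "\<dots> = (\<Sum>l\<in>{i}. dmat n a $$ (i,l) * dmat n b $$ (l,j))"
    by (rule sum.mono_neutral_right, use i j in \<open>auto simp: dmat_def\<close>)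
  finally show "(dmat n a * dmat n b) $$ (i,j) = dmat n (\<lambda>i. a i * b i) $$ (i,j)"
    using i j by (auto simp: dmat_def)
qed (auto simp: dmat_def)

lemma cnj_real_mult: "cnj z * (complex_of_real a * z) = complex_of_real (a * (cmod z)\<^sup>2)"
proof -
  have "complex_of_real (a * (cmod z)\<^sup>2) = complex_of_real a * (z * cnj z)"
    by (simp only: of_real_mult complex_norm_square)
  thus ?thesis by (metis mult.assoc mult.commute)
qed

lemma qf_dmat: assumes "w \<in> carrier_vec n"
  shows "qf (dmat n d) w = complex_of_real (\<Sum>i<n. d i * (cmod (w $ i))\<^sup>2)"
proof -
  have "qf (dmat n d) w = (\<Sum>i<n. cnj (w $ i) * (\<Sum>l<n. dmat n d $$ (i,l) * w $ l))"
    unfolding qf_def ip_def using assms by (auto simp: mv_entry[of _ n n] intro!: sum.cong)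
  also have "\<dots> = (\<Sum>i<n. cnj (w $ i) * (\<Sum>l\<in>{i}. dmat n d $$ (i,l) * w $ l))"
    by (rule sum.cong[OF refl], rule arg_cong[where f = "\<lambda>x. _ * x"],
        rule sum.mono_neutral_right, auto simp: dmat_def)
  also have "\<dots> = (\<Sum>i<n. complex_of_real (d i * (cmod (w $ i))\<^sup>2))"
    by (rule sum.cong[OF refl], auto simp: dmat_def cnj_real_mult)
  finally show ?thesis by simp
qed

lemma spectral':
  assumes "H \<in> carrier_mat n n" "mat_adjoint H = H"
  shows "\<exists>U d. U \<in> carrier_mat n n \<and> mat_adjoint U * U = 1\<^sub>m n \<and> U * mat_adjoint U = 1\<^sub>m n \<and>
     mat_adjoint U * H * U = dmat n d \<and> H = U * dmat n d * mat_adjoint U"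
proof -
  obtain U d where U: "U \<in> carrier_mat n n" "mat_adjoint U * U = 1\<^sub>m n" "U * mat_adjoint U = 1\<^sub>m n"
    "mat_adjoint U * H * U = dmat n d" using spectral[OF assms] unfolding dmat_def by blast
  have aU: "mat_adjoint U \<in> carrier_mat n n" using U by auto
  have H: "H \<in> carrier_mat n n" by fact
  have "U * dmat n d * mat_adjoint U = U * (mat_adjoint U * H * U) * mat_adjoint U" using U by simp
  also have "\<dots> = (U * mat_adjoint U) * H * (U * mat_adjoint U)"
  proof -
    have a1: "U * (mat_adjoint U * H * U) = U * (mat_adjoint U * H) * U"
      by (rule assoc_mult_mat[symmetric], use U aU H in auto)
    have a2: "U * (mat_adjoint U * H) = U * mat_adjoint U * H"
      by (rule assoc_mult_mat[symmetric], use U aU H in auto)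
    have a3: "U * mat_adjoint U * H * U * mat_adjoint U = U * mat_adjoint U * H * (U * mat_adjoint U)"
      by (rule assoc_mult_mat, use U aU H in auto)
    show ?thesis unfolding a1 unfolding a2 unfolding a3 ..
  qed
  also have "\<dots> = H" using U H by simp
  finally show ?thesis using U by metis
qed

lemma mat_eq_of_diff_zero: assumes "S \<in> carrier_mat n n" "T \<in> carrier_mat n n" "S - T = 0\<^sub>m n n"
  shows "S = (T :: complex mat)"
proof (rule eq_matI)
  fix i j assume "i < dim_row T" "j < dim_col T"
  hence ij: "i < n" "j < n" using assms by auto
  have "(S - T) $$ (i,j) = S $$ (i,j) - T $$ (i,j)" using assms(1,2) ij by simp
  hence "S $$ (i,j) - T $$ (i,j) = 0" unfolding assms(3) using ij by simp
  thus "S $$ (i,j) = T $$ (i,j)" by simp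
qed (use assms in auto)


lemma dmat_cong: "(\<And>i. i < n \<Longrightarrow> a i = b i) \<Longrightarrow> dmat n a = dmat n b"
  unfolding dmat_def by (rule eq_matI, auto)

lemma col_carrier': "U \<in> carrier_mat n n \<Longrightarrow> col U i \<in> carrier_vec n" by auto

lemma mat_telescope: "A \<in> carrier_mat n m \<Longrightarrow> B \<in> carrier_mat n m \<Longrightarrow> C \<in> carrier_mat n m \<Longrightarrow>
  A - C = (A - B) + (B - (C :: complex mat))"
  by (rule eq_matI) auto

lemma psd_sqrt_ex: assumes P: "cmat_pos n P" shows "\<exists>S. cmat_pos n S \<and> S * S = P"
proof -
  have Pc: "P \<in> carrier_mat n n" and Ph: "mat_adjoint P = P" and Pq: "\<And>v. v \<in> carrier_vec n \<Longrightarrow> 0 \<le> Re (qf P v)"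
    using P unfolding cmat_pos_qf cmat_sa_def by auto
  obtain U d where U: "U \<in> carrier_mat n n" and UU: "mat_adjoint U * U = 1\<^sub>m n" and UU2: "U * mat_adjoint U = 1\<^sub>m n"
    and D: "mat_adjoint U * P * U = dmat n d" and PD: "P = U * dmat n d * mat_adjoint U"
    using spectral'[OF Pc Ph] by blast
  have aU: "mat_adjoint U \<in> carrier_mat n n" using U by auto
  have dnn: "\<And>i. i < n \<Longrightarrow> 0 \<le> d i"
  proof -
    fix i assume i: "i < n"
    have "complex_of_real (d i) = dmat n d $$ (i,i)" using i by (simp add: dmat_def)
    also have "\<dots> = ip (col U i) (P *\<^sub>v col U i)" unfolding D[symmetric] by (rule adj_mid_entry[OF U Pc i i])
    also have "\<dots> = qf P (col U i)" unfolding qf_def ..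
    finally have "d i = Re (qf P (col U i))" by (metis Re_complex_of_real)
    thus "0 \<le> d i" using Pq[OF col_carrier'[OF U]] by simp
  qed
  define Q where "Q = dmat n (\<lambda>i. sqrt (d i))"
  have Q: "Q \<in> carrier_mat n n" unfolding Q_def by simp
  define S where "S = U * Q * mat_adjoint U"
  have S: "S \<in> carrier_mat n n" unfolding S_def using U Q by auto
  have Sh: "mat_adjoint S = S"
  proof -
    have "mat_adjoint S = mat_adjoint (mat_adjoint U) * mat_adjoint (U * Q)"
      unfolding S_def by (rule adj_mult, use U Q in auto)
    also have "mat_adjoint (U * Q) = mat_adjoint Q * mat_adjoint U" by (rule adj_mult, use U Q in auto)
    finally show ?thesis unfolding S_def Q_def using U by (simp add: assoc_mult_mat[of _ n n _ n _ n] mult_carrier_mat[of _ n n _ n])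
  qed
  have Sq: "\<And>v. v \<in> carrier_vec n \<Longrightarrow> 0 \<le> Re (qf S v)"
  proof -
    fix v :: "complex vec" assume v: "v \<in> carrier_vec n"
    have "qf S v = qf (mat_adjoint (mat_adjoint U) * Q * mat_adjoint U) v" unfolding S_def by simp
    also have "\<dots> = qf Q (mat_adjoint U *\<^sub>v v)" by (rule qf_conj[OF aU Q v])
    also have "\<dots> = complex_of_real (\<Sum>i<n. sqrt (d i) * (cmod ((mat_adjoint U *\<^sub>v v) $ i))\<^sup>2)"
      unfolding Q_def by (rule qf_dmat, use aU v in auto)
    finally have e: "qf S v = complex_of_real (\<Sum>i<n. sqrt (d i) * (cmod ((mat_adjoint U *\<^sub>v v) $ i))\<^sup>2)" .
    have "0 \<le> (\<Sum>i<n. sqrt (d i) * (cmod ((mat_adjoint U *\<^sub>v v) $ i))\<^sup>2)"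
      by (rule sum_nonneg) (simp add: dnn)
    thus "0 \<le> Re (qf S v)" unfolding e by simp
  qed
  have "S * S = U * (Q * Q) * mat_adjoint U"
  proof -
    have "S * S = U * Q * (mat_adjoint U * U) * Q * mat_adjoint U"
      unfolding S_def using U Q aU by (simp add: assoc_mult_mat[of _ n n _ n _ n] mult_carrier_mat[of _ n n _ n])
    thus ?thesis unfolding UU using U Q aU by (simp add: assoc_mult_mat[of _ n n _ n _ n] mult_carrier_mat[of _ n n _ n])
  qed
  also have "Q * Q = dmat n d" unfolding Q_def dmat_mult by (rule dmat_cong, use dnn in auto)
  finally have "S * S = P" using PD by simp
  thus ?thesis using S Sh Sq unfolding cmat_pos_qf cmat_sa_def by blast
qed

lemma herm_qf_real: assumes "cmat_pos n S" "v \<in> carrier_vec n"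
  shows "qf S v = complex_of_real (Re (qf S v))" "0 \<le> Re (qf S v)"
  using assms qf_herm_real[of S n v] unfolding cmat_pos_qf cmat_sa_def by auto

lemma psd_sqrt_unique: assumes S: "cmat_pos n S" and T: "cmat_pos n T" and ST: "S * S = T * T"
  shows "S = T"
proof -
  have Sc: "S \<in> carrier_mat n n" and Sh: "mat_adjoint S = S" and Tc: "T \<in> carrier_mat n n" and Th: "mat_adjoint T = T"
    using S T unfolding cmat_pos_qf cmat_sa_def by auto
  define D where "D = S - T"
  have Dc: "D \<in> carrier_mat n n" unfolding D_def using Sc Tc by auto
  have Dh: "mat_adjoint D = D" unfolding D_def using Sc Tc Sh Th by (simp add: adj_minus)
  obtain U d where U: "U \<in> carrier_mat n n" and UU: "mat_adjoint U * U = 1\<^sub>m n" and UU2: "U * mat_adjoint U = 1\<^sub>m n"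
    and DD: "mat_adjoint U * D * U = dmat n d" and DU: "D = U * dmat n d * mat_adjoint U"
    using spectral'[OF Dc Dh] by blast
  have aU: "mat_adjoint U \<in> carrier_mat n n" using U by auto
  have d0: "\<And>i. i < n \<Longrightarrow> d i = 0"
  proof (rule ccontr)
    fix i assume i: "i < n" and di: "d i \<noteq> 0"
    define v where "v = col U i"
    have v: "v \<in> carrier_vec n" unfolding v_def using U by auto
    have DUe: "D * U = U * dmat n d"
      unfolding DU using U aU by (simp add: assoc_mult_mat[of _ n n _ n _ n] mult_carrier_mat[of _ n n _ n] UU right_mult_one_mat[OF dmat_carrier])
    have Dv: "D *\<^sub>v v = complex_of_real (d i) \<cdot>\<^sub>v v"
    proof (rule eq_vecI)
      fix k assume k: "k < dim_vec (complex_of_real (d i) \<cdot>\<^sub>v v)"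
      hence k: "k < n" using v by auto
      have "(D *\<^sub>v v) $ k = (D * U) $$ (k,i)" unfolding v_def using Dc U k i by simp
      also have "\<dots> = (\<Sum>l<n. U $$ (k,l) * dmat n d $$ (l,i))" unfolding DUe using U k i by (intro mult_entry) auto
      also have "\<dots> = (\<Sum>l\<in>{i}. U $$ (k,l) * dmat n d $$ (l,i))"
        by (rule sum.mono_neutral_right, use i in \<open>auto simp: dmat_def\<close>)
      also have "\<dots> = (complex_of_real (d i) \<cdot>\<^sub>v v) $ k" unfolding v_def using U k i by (simp add: dmat_def)
      finally show "(D *\<^sub>v v) $ k = (complex_of_real (d i) \<cdot>\<^sub>v v) $ k" .
    qed (use Dc v in auto)
    have nv: "nsq v = 1"
    proof -
      have "complex_of_real (nsq v) = ip v v" by (simp add: ip_self)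
      also have "\<dots> = ip (col U i) (1\<^sub>m n *\<^sub>v col U i)" unfolding v_def using col_carrier'[OF U, of i] by simp
      also have "\<dots> = (mat_adjoint U * 1\<^sub>m n * U) $$ (i,i)" by (rule adj_mid_entry[symmetric, OF U _ i i], simp)
      also have "\<dots> = 1" using U i UU by simp
      finally show ?thesis by (metis of_real_eq_1_iff)
    qed
    have "S * S - T * T = (S * S - S * T) + (S * T - T * T)"
      by (rule mat_telescope, use Sc Tc in auto)
    also have "S * S - S * T = S * D" unfolding D_def using Sc Tc by (simp add: mult_minus_distrib_mat[of _ n n])
    also have "S * T - T * T = D * T" unfolding D_def using Sc Tc by (simp add: minus_mult_distrib_mat[of _ n n])
    finally have "S * S - T * T = S * D + D * T" .
    moreover have "T * T - T * T = 0\<^sub>m n n" by (rule eq_matI) (use Tc in auto)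
    ultimately have z0: "S * D + D * T = 0\<^sub>m n n" unfolding ST by simp
    have "0 = qf (S * D + D * T) v" unfolding z0 qf_def ip_def using v by simp
    also have "\<dots> = qf (S * D) v + qf (D * T) v" using Sc Dc Tc v by (intro qf_add) auto
    also have "qf (S * D) v = complex_of_real (d i) * qf S v"
      unfolding qf_def using Sc Dc v Dv by (simp add: mult_mat_vec[OF Sc v] ip_smult_right[of _ n])
    also have "qf (D * T) v = complex_of_real (d i) * qf T v"
    proof -
      have "qf (D * T) v = ip v (mat_adjoint D *\<^sub>v (T *\<^sub>v v))" unfolding qf_def Dh using Dc Tc v by simp
      also have "\<dots> = ip (D *\<^sub>v v) (T *\<^sub>v v)" by (rule ip_adj[OF Dc _ v], use Tc v in auto)
      also have "\<dots> = complex_of_real (d i) * qf T v" unfolding Dv qf_def using v Tc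
        by (simp add: ip_smult_left[of _ n])
      finally show ?thesis .
    qed
    finally have "0 = complex_of_real (d i) * (qf S v + qf T v)" by (simp add: distrib_left)
    hence z: "qf S v + qf T v = 0" using di by simp
    have "Re (qf S v) = 0" "Re (qf T v) = 0"
      using herm_qf_real(2)[OF S v] herm_qf_real(2)[OF T v] arg_cong[OF z, of Re] by auto
    hence "qf S v = 0" "qf T v = 0" using herm_qf_real(1)[OF S v] herm_qf_real(1)[OF T v] by auto
    hence "qf D v = 0" unfolding D_def using Sc Tc v by (simp add: qf_minus)
    moreover have "qf D v = complex_of_real (d i)" unfolding qf_def Dv using v
      by (simp add: ip_smult_right[of _ n] ip_self nv)
    ultimately show False using di by simp
  qed
  have "dmat n d = 0\<^sub>m n n" unfolding dmat_def by (rule eq_matI, auto simp: d0)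
  hence "D = 0\<^sub>m n n" unfolding DU using U aU by simp
  thus ?thesis unfolding D_def by (rule mat_eq_of_diff_zero[OF Sc Tc])
qed

lemma sqrt_props: assumes "cmat_pos n P"
  shows "cmat_pos n (cmat_sqrt n P)" "cmat_sqrt n P * cmat_sqrt n P = P"
proof -
  have "\<exists>!S. cmat_pos n S \<and> S * S = P"
    using psd_sqrt_ex[OF assms] psd_sqrt_unique by metis
  from theI'[OF this] show "cmat_pos n (cmat_sqrt n P)" "cmat_sqrt n P * cmat_sqrt n P = P"
    unfolding cmat_sqrt_def by auto
qed


lemma mult_zero_vec': "B \<in> carrier_mat m n \<Longrightarrow> B *\<^sub>v 0\<^sub>v n = (0\<^sub>v m :: 'a::semiring_0 vec)"
  by (rule eq_vecI) (auto simp: scalar_prod_def)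

lemma inv_ex: assumes "invertible_mat A" "A \<in> carrier_mat n n"
  shows "\<exists>B\<in>carrier_mat n n. A * B = 1\<^sub>m n \<and> B * A = 1\<^sub>m n"
proof -
  obtain B where AB: "A * B = 1\<^sub>m (dim_row A)" and BA: "B * A = 1\<^sub>m (dim_row B)"
    using assms(1) unfolding invertible_mat_def inverts_mat_def by auto
  have "dim_col B = n" using arg_cong[OF AB, of dim_col] assms(2) by auto
  moreover have "dim_row B = n" using arg_cong[OF BA, of dim_col] assms(2) by auto
  ultimately show ?thesis using AB BA assms(2) by (intro bexI[of _ B]) auto
qed

lemma inv_kernel: assumes A: "A \<in> carrier_mat n n"
  and k: "\<And>v. v \<in> carrier_vec n \<Longrightarrow> A *\<^sub>v v = 0\<^sub>v n \<Longrightarrow> v = 0\<^sub>v n"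
  shows "invertible_mat (A :: complex mat)"
proof -
  have "det A \<noteq> 0" using det_0_iff_vec_prod_zero_field[OF A] k by auto
  from det_non_zero_imp_unit[OF A this, of "()"]
  obtain B where B: "B \<in> carrier_mat n n" "B * A = 1\<^sub>m n" "A * B = 1\<^sub>m n"
    unfolding Units_def ring_mat_def by auto
  thus ?thesis unfolding invertible_mat_def inverts_mat_def square_mat.simps using A by auto
qed

lemma invertible_kernel: assumes "invertible_mat A" "A \<in> carrier_mat n n" "v \<in> carrier_vec n" "A *\<^sub>v v = 0\<^sub>v n"
  shows "v = 0\<^sub>v n"
proof -
  obtain B where B: "B \<in> carrier_mat n n" "B * A = 1\<^sub>m n" using inv_ex[OF assms(1,2)] by auto
  have "v = (B * A) *\<^sub>v v" using B assms by simp
  also have "\<dots> = B *\<^sub>v (A *\<^sub>v v)" using B assms by (intro assoc_mult_mat_vec) auto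
  finally show ?thesis using assms B mult_zero_vec'[OF B(1)] by simp
qed

lemma inv_props: assumes "invertible_mat A" "A \<in> carrier_mat n n"
  shows "cmat_inv n A \<in> carrier_mat n n" "A * cmat_inv n A = 1\<^sub>m n" "cmat_inv n A * A = 1\<^sub>m n"
proof -
  have "\<exists>!Z. Z \<in> carrier_mat n n \<and> A * Z = 1\<^sub>m n \<and> Z * A = 1\<^sub>m n"
  proof (rule ex_ex1I)
    show "\<exists>Z. Z \<in> carrier_mat n n \<and> A * Z = 1\<^sub>m n \<and> Z * A = 1\<^sub>m n" using inv_ex[OF assms] by auto
  next
    fix Z Y assume Z: "Z \<in> carrier_mat n n \<and> A * Z = 1\<^sub>m n \<and> Z * A = 1\<^sub>m n"
      and Y: "Y \<in> carrier_mat n n \<and> A * Y = 1\<^sub>m n \<and> Y * A = 1\<^sub>m n"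
    from Z have Z1: "Z \<in> carrier_mat n n" and Z2: "Z * A = 1\<^sub>m n" by auto
    from Y have Y1: "Y \<in> carrier_mat n n" and Y2: "A * Y = 1\<^sub>m n" by auto
    have "Z = Z * (A * Y)" unfolding Y2 using Z1 by simp
    also have "\<dots> = (Z * A) * Y" using Z1 Y1 assms by (intro assoc_mult_mat[symmetric]) auto
    finally show "Z = Y" unfolding Z2 using Y1 by simp
  qed
  from theI'[OF this] show "cmat_inv n A \<in> carrier_mat n n" "A * cmat_inv n A = 1\<^sub>m n" "cmat_inv n A * A = 1\<^sub>m n"
    unfolding cmat_inv_def by auto
qed

lemma inv_unique: assumes "A \<in> carrier_mat n n" "B \<in> carrier_mat n n" "A * B = 1\<^sub>m n" "B * A = 1\<^sub>m n"
  shows "cmat_inv n A = B"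
proof -
  have inv: "invertible_mat A" unfolding invertible_mat_def inverts_mat_def using assms by auto
  note p = inv_props[OF inv assms(1)]
  have "cmat_inv n A = cmat_inv n A * (A * B)" using assms p by simp
  also have "\<dots> = (cmat_inv n A * A) * B" using assms p by (intro assoc_mult_mat[symmetric]) auto
  finally show ?thesis using assms p by simp
qed

lemma psd_null: assumes P: "cmat_pos n P" and v: "v \<in> carrier_vec n" and z: "qf P v = 0"
  shows "P *\<^sub>v v = 0\<^sub>v n"
proof -
  define S where "S = cmat_sqrt n P"
  have S: "cmat_pos n S" "S * S = P" unfolding S_def using sqrt_props[OF P] by auto
  have Sc: "S \<in> carrier_mat n n" and Sh: "mat_adjoint S = S" using S(1) unfolding cmat_pos_def cmat_sa_def by auto
  have "complex_of_real (nsq (S *\<^sub>v v)) = qf (mat_adjoint S * S) v" by (rule nsq_qf[OF Sc v])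
  also have "\<dots> = 0" unfolding Sh S(2) z ..
  finally have "nsq (S *\<^sub>v v) = 0" by simp
  hence Sv: "S *\<^sub>v v = 0\<^sub>v n" using nsq_zero[of "S *\<^sub>v v" n] Sc v by auto
  have "P *\<^sub>v v = S *\<^sub>v (S *\<^sub>v v)" unfolding S(2)[symmetric] using Sc v by (intro assoc_mult_mat_vec) auto
  thus ?thesis unfolding Sv using mult_zero_vec'[OF Sc] by simp
qed

lemma pd_qf_zero: assumes "cmat_pd n P" "v \<in> carrier_vec n" "qf P v = 0" shows "v = 0\<^sub>v n"
proof -
  have P: "cmat_pos n P" "invertible_mat P" "P \<in> carrier_mat n n" using assms(1) unfolding cmat_pd_def cmat_pos_def cmat_sa_def by auto
  show ?thesis using invertible_kernel[OF P(2,3) assms(2) psd_null[OF P(1) assms(2,3)]] .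
qed

lemma pd_inv: assumes Y: "cmat_pd n Y" shows "cmat_pd n (cmat_inv n Y)"
proof -
  have Yc: "Y \<in> carrier_mat n n" and Yh: "mat_adjoint Y = Y" and Yi: "invertible_mat Y"
    and Yq: "\<And>v. v \<in> carrier_vec n \<Longrightarrow> 0 \<le> Re (qf Y v)"
    using Y unfolding cmat_pd_def cmat_pos_qf cmat_sa_def by auto
  note p = inv_props[OF Yi Yc]
  define Z where "Z = cmat_inv n Y"
  have Zc: "Z \<in> carrier_mat n n" "Y * Z = 1\<^sub>m n" "Z * Y = 1\<^sub>m n" using p unfolding Z_def by auto
  have Zh: "mat_adjoint Z = Z"
  proof -
    have a1: "Y * mat_adjoint Z = 1\<^sub>m n" using adj_mult[of Z n n Y n] Zc Yc Yh by simp
    have a2: "mat_adjoint Z * Y = 1\<^sub>m n" using adj_mult[of Y n n Z n] Zc Yc Yh by simp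
    have "cmat_inv n Y = mat_adjoint Z" by (rule inv_unique[OF Yc _ a1 a2], use Zc in auto)
    thus ?thesis unfolding Z_def by simp
  qed
  have Zq: "\<And>v. v \<in> carrier_vec n \<Longrightarrow> 0 \<le> Re (qf Z v)"
  proof -
    fix v :: "complex vec" assume v: "v \<in> carrier_vec n"
    define w where "w = Z *\<^sub>v v"
    have w: "w \<in> carrier_vec n" unfolding w_def using Zc v by auto
    have vw: "v = Y *\<^sub>v w" unfolding w_def using Zc Yc v by (simp add: assoc_mult_mat_vec[symmetric, of Y n n Z n])
    have "qf Z v = ip v w" unfolding qf_def w_def ..
    also have "\<dots> = ip (Y *\<^sub>v w) w" using vw by simp
    also have "\<dots> = ip w (mat_adjoint Y *\<^sub>v w)" by (rule ip_adj[symmetric, OF Yc w w])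
    also have "\<dots> = qf Y w" unfolding qf_def Yh ..
    finally show "0 \<le> Re (qf Z v)" using Yq[OF w] by simp
  qed
  have "invertible_mat Z" unfolding invertible_mat_def inverts_mat_def using Zc Yc by auto
  thus ?thesis unfolding Z_def[symmetric] cmat_pd_def cmat_pos_qf cmat_sa_def using Zc Zh Zq by auto
qed

lemma invsqrt_props: assumes Y: "cmat_pd n Y"
  defines "R \<equiv> cmat_invsqrt n Y"
  shows "cmat_pos n R" "R \<in> carrier_mat n n" "mat_adjoint R = R" "R * R = cmat_inv n Y"
    "R * Y * R = 1\<^sub>m n" "Y * cmat_inv n Y = 1\<^sub>m n" "cmat_inv n Y * Y = 1\<^sub>m n"
    "cmat_inv n Y \<in> carrier_mat n n"
proof -
  have Yc: "Y \<in> carrier_mat n n" and Yi: "invertible_mat Y" using Y unfolding cmat_pd_def cmat_pos_def cmat_sa_def by auto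
  note p = inv_props[OF Yi Yc]
  have Zp: "cmat_pos n (cmat_inv n Y)" using pd_inv[OF Y] unfolding cmat_pd_def by auto
  show R: "cmat_pos n R" "R * R = cmat_inv n Y" unfolding R_def cmat_invsqrt_def using sqrt_props[OF Zp] by auto
  show Rc: "R \<in> carrier_mat n n" "mat_adjoint R = R" using R(1) unfolding cmat_pos_def cmat_sa_def by auto
  show "Y * cmat_inv n Y = 1\<^sub>m n" "cmat_inv n Y * Y = 1\<^sub>m n" "cmat_inv n Y \<in> carrier_mat n n" using p by auto
  have RRY: "R * (R * Y) = 1\<^sub>m n" using assoc_mult_mat[of R n n R n Y n] Rc Yc R p by simp
  have "(R * Y) * R = 1\<^sub>m n" using mat_mult_left_right_inverse[OF Rc(1) _ RRY] Rc Yc by auto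
  thus "R * Y * R = 1\<^sub>m n" .
qed


lemma entry_le_nsq: assumes "v \<in> carrier_vec n" "i < n" shows "(cmod (v $ i))\<^sup>2 \<le> nsq v"
  unfolding nsq_def using assms by (intro member_le_sum) auto

lemma entry_le_norm: assumes "v \<in> carrier_vec n" "i < n" shows "cmod (v $ i) \<le> sqrt (nsq v)"
  using entry_le_nsq[OF assms] real_le_rsqrt by blast

definition mbound :: "complex mat \<Rightarrow> real" where
  "mbound Z = (\<Sum>i<dim_row Z. (\<Sum>j<dim_col Z. cmod (Z $$ (i,j)))\<^sup>2)"

lemma mv_bound: assumes Z: "Z \<in> carrier_mat n k" and v: "v \<in> carrier_vec k" and nv: "nsq v \<le> 1"
  shows "nsq (Z *\<^sub>v v) \<le> mbound Z"
proof -
  have "nsq (Z *\<^sub>v v) = (\<Sum>i<n. (cmod ((Z *\<^sub>v v) $ i))\<^sup>2)" unfolding nsq_def using Z by simp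
  also have "\<dots> \<le> (\<Sum>i<n. (\<Sum>j<k. cmod (Z $$ (i,j)))\<^sup>2)"
  proof (rule sum_mono)
    fix i assume "i \<in> {..<n}" hence i: "i < n" by simp
    have "cmod ((Z *\<^sub>v v) $ i) = cmod (\<Sum>j<k. Z $$ (i,j) * v $ j)" using mv_entry[OF Z v i] by simp
    also have "\<dots> \<le> (\<Sum>j<k. cmod (Z $$ (i,j) * v $ j))" by (rule norm_sum)
    also have "\<dots> \<le> (\<Sum>j<k. cmod (Z $$ (i,j)))"
    proof (rule sum_mono)
      fix j assume "j \<in> {..<k}" hence j: "j < k" by simp
      have "cmod (v $ j) \<le> 1" using entry_le_norm[OF v j] nv by (smt (verit) real_sqrt_le_1_iff)
      thus "cmod (Z $$ (i,j) * v $ j) \<le> cmod (Z $$ (i,j))"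
        by (simp add: norm_mult mult_left_le)
    qed
    finally show "(cmod ((Z *\<^sub>v v) $ i))\<^sup>2 \<le> (\<Sum>j<k. cmod (Z $$ (i,j)))\<^sup>2"
      by (intro power_mono) auto
  qed
  also have "\<dots> = mbound Z" unfolding mbound_def using Z by simp
  finally show ?thesis .
qed

definition opset :: "complex mat \<Rightarrow> real set" where
  "opset X = {cvec_norm (X *\<^sub>v v) | v. v \<in> carrier_vec (dim_col X) \<and> cvec_norm v \<le> 1}"

lemma op_norm_opset: "op_norm X = Sup (opset X)" unfolding op_norm_def opset_def ..

lemma opset_ne: "0 \<in> opset X"
proof -
  have "cvec_norm (X *\<^sub>v 0\<^sub>v (dim_col X)) = 0" unfolding cvec_norm_nsq nsq_def by simp
  moreover have "cvec_norm (0\<^sub>v (dim_col X)) \<le> 1" unfolding cvec_norm_nsq nsq_def by simp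
  ultimately show ?thesis unfolding opset_def by force
qed

lemma opset_bdd: assumes "Z \<in> carrier_mat n k" shows "bdd_above (opset Z)"
proof (rule bdd_aboveI)
  fix x assume "x \<in> opset Z"
  then obtain v where x: "x = cvec_norm (Z *\<^sub>v v)" and v: "v \<in> carrier_vec k" and nv: "cvec_norm v \<le> 1"
    unfolding opset_def using assms by auto
  have "nsq v \<le> 1" using nv unfolding cvec_norm_nsq using nsq_nonneg[of v] by simp
  hence "nsq (Z *\<^sub>v v) \<le> mbound Z" by (rule mv_bound[OF assms v])
  thus "x \<le> sqrt (mbound Z)" unfolding x cvec_norm_nsq by simp
qed

lemma opn_nonneg: assumes "Z \<in> carrier_mat n k" shows "0 \<le> op_norm Z"
  unfolding op_norm_opset using cSup_upper[OF opset_ne opset_bdd[OF assms]] .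

lemma opn_vec: assumes Z: "Z \<in> carrier_mat n k" and v: "v \<in> carrier_vec k"
  shows "nsq (Z *\<^sub>v v) \<le> (op_norm Z)\<^sup>2 * nsq v"
proof (cases "nsq v = 0")
  case True
  hence "v = 0\<^sub>v k" using nsq_zero[OF v] by simp
  hence "Z *\<^sub>v v = 0\<^sub>v n" using mult_zero_vec'[OF Z] by simp
  thus ?thesis using True unfolding nsq_def by simp
next
  case False
  hence nv: "nsq v > 0" using nsq_nonneg[of v] by simp
  define w where "w = complex_of_real (1 / sqrt (nsq v)) \<cdot>\<^sub>v v"
  have w: "w \<in> carrier_vec k" unfolding w_def using v by auto
  have nw: "nsq w = 1" unfolding w_def nsq_smult_real using nv by (simp add: power_divide)
  have "cvec_norm (Z *\<^sub>v w) \<in> opset Z" unfolding opset_def using w nw Z by (auto simp: cvec_norm_nsq)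
  hence le: "cvec_norm (Z *\<^sub>v w) \<le> op_norm Z" unfolding op_norm_opset by (rule cSup_upper[OF _ opset_bdd[OF Z]])
  have "Z *\<^sub>v w = complex_of_real (1 / sqrt (nsq v)) \<cdot>\<^sub>v (Z *\<^sub>v v)" unfolding w_def by (rule mult_mat_vec[OF Z v])
  hence "nsq (Z *\<^sub>v w) = (1 / sqrt (nsq v))\<^sup>2 * nsq (Z *\<^sub>v v)" by (simp only: nsq_smult_real)
  hence "nsq (Z *\<^sub>v w) = nsq (Z *\<^sub>v v) / nsq v" using nv by (simp add: power_divide)
  hence "sqrt (nsq (Z *\<^sub>v v) / nsq v) \<le> op_norm Z" using le unfolding cvec_norm_nsq by simp
  hence "nsq (Z *\<^sub>v v) / nsq v \<le> (op_norm Z)\<^sup>2"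
    using opn_nonneg[OF Z] nsq_nonneg[of "Z *\<^sub>v v"] nv by (simp add: real_sqrt_le_iff sqrt_le_D)
  thus ?thesis using nv by (simp add: divide_le_eq)
qed

lemma opn_le: assumes Z: "Z \<in> carrier_mat n k" and c: "0 \<le> c"
  and h: "\<And>v. v \<in> carrier_vec k \<Longrightarrow> nsq (Z *\<^sub>v v) \<le> c * nsq v"
  shows "(op_norm Z)\<^sup>2 \<le> c"
proof -
  have "op_norm Z \<le> sqrt c" unfolding op_norm_opset
  proof (rule cSup_least)
    show "opset Z \<noteq> {}" using opset_ne by auto
  next
    fix x assume "x \<in> opset Z"
    then obtain v where x: "x = cvec_norm (Z *\<^sub>v v)" and v: "v \<in> carrier_vec k" and nv: "cvec_norm v \<le> 1"
      unfolding opset_def using assms by auto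
    have nv1: "nsq v \<le> 1" using nv unfolding cvec_norm_nsq using nsq_nonneg[of v] by simp
    have "nsq (Z *\<^sub>v v) \<le> c" using h[OF v] nv1 c by (smt (verit) mult_left_le)
    thus "x \<le> sqrt c" unfolding x cvec_norm_nsq by simp
  qed
  thus ?thesis using opn_nonneg[OF Z] c by (metis power_mono real_sqrt_pow2)
qed

lemma opn_zero: assumes Z: "Z \<in> carrier_mat n k" and z: "op_norm Z = 0" shows "Z = 0\<^sub>m n k"
proof (rule eq_matI)
  fix i j assume "i < dim_row (0\<^sub>m n k)" "j < dim_col (0\<^sub>m n k)"
  hence i: "i < n" and j: "j < k" by auto
  have u: "unit_vec k j \<in> carrier_vec k" by simp
  have "nsq (Z *\<^sub>v unit_vec k j) \<le> 0" using opn_vec[OF Z u] z by simp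
  hence "nsq (Z *\<^sub>v unit_vec k j) = 0" using nsq_nonneg by (metis antisym)
  hence "Z *\<^sub>v unit_vec k j = 0\<^sub>v n" using nsq_zero[of _ n] Z by auto
  hence "(Z *\<^sub>v unit_vec k j) $ i = 0" using i by simp
  moreover have "(Z *\<^sub>v unit_vec k j) $ i = Z $$ (i,j)" using Z i j by simp
  ultimately show "Z $$ (i,j) = 0\<^sub>m n k $$ (i,j)" using i j by simp
qed (use Z in auto)


context
  fixes sc :: "complex \<Rightarrow> 'v::ab_group_add \<Rightarrow> 'v" and st :: "'v \<Rightarrow> 'v"
  assumes cs: "cstar_space sc st"
begin

lemma sc_add: "sc a (x + y) = sc a x + sc a y" using cs unfolding cstar_space_def by auto
lemma sc_add2: "sc (a + b) x = sc a x + sc b x" using cs unfolding cstar_space_def by auto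
lemma sc_mult: "sc (a * b) x = sc a (sc b x)" using cs unfolding cstar_space_def by auto
lemma sc_one: "sc 1 x = x" using cs unfolding cstar_space_def by auto
lemma st_add: "st (x + y) = st x + st y" using cs unfolding cstar_space_def by auto
lemma st_sc: "st (sc a x) = sc (cnj a) (st x)" using cs unfolding cstar_space_def by auto
lemma st_st: "st (st x) = x" using cs unfolding cstar_space_def by auto

lemma sc_zero: "sc a 0 = 0"
proof -
  have "sc a 0 = sc a (0 + 0)" by simp
  thus ?thesis unfolding sc_add by simp
qed

lemma sc_zero2: "sc 0 x = 0"
proof -
  have "sc 0 x = sc (0 + 0) x" by simp
  thus ?thesis unfolding sc_add2 by simp
qed

lemma st_zero: "st 0 = 0"
proof -
  have "st 0 = st (0 + 0)" by simp
  thus ?thesis unfolding st_add by simp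
qed

lemma sc_sum: "sc a (\<Sum>i\<in>S. f i) = (\<Sum>i\<in>S. sc a (f i))"
proof (cases "finite S")
  case True thus ?thesis by (induction S rule: finite_induct) (auto simp: sc_zero sc_add)
qed (simp add: sc_zero)

lemma sc_sum2: "sc (\<Sum>i\<in>S. f i) x = (\<Sum>i\<in>S. sc (f i) x)"
proof (cases "finite S")
  case True thus ?thesis by (induction S rule: finite_induct) (auto simp: sc_zero2 sc_add2)
qed (simp add: sc_zero2)

lemma st_sum: "st (\<Sum>i\<in>S. f i) = (\<Sum>i\<in>S. st (f i))"
proof (cases "finite S")
  case True thus ?thesis by (induction S rule: finite_induct) (auto simp: st_zero st_add)
qed (simp add: st_zero)

lemma triple_entry: "p < dim_row L \<Longrightarrow> q < dim_col R \<Longrightarrow>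
  vmat_triple sc L A R $$ (p,q) = (\<Sum>i<dim_row A. \<Sum>j<dim_col A. sc (L $$ (p,i) * R $$ (j,q)) (A $$ (i,j)))"
  unfolding vmat_triple_def by simp

lemma triple_carrier[simp]: "vmat_triple sc L A R \<in> carrier_mat (dim_row L) (dim_col R)"
  unfolding vmat_triple_def by simp

lemma triple_dims[simp]: "dim_row (vmat_triple sc L A R) = dim_row L" "dim_col (vmat_triple sc L A R) = dim_col R"
  unfolding vmat_triple_def by simp_all

lemma triple_comp: assumes L: "L \<in> carrier_mat p m" and L': "L' \<in> carrier_mat m n1"
  and A: "A \<in> carrier_mat n1 n2" and R': "R' \<in> carrier_mat n2 m'" and R: "R \<in> carrier_mat m' q"
  shows "vmat_triple sc L (vmat_triple sc L' A R') R = vmat_triple sc (L * L') A (R' * R)"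
proof (rule eq_matI)
  fix a b assume "a < dim_row (vmat_triple sc (L * L') A (R' * R))" "b < dim_col (vmat_triple sc (L * L') A (R' * R))"
  hence a: "a < p" and b: "b < q" using L R by auto
  have "vmat_triple sc L (vmat_triple sc L' A R') R $$ (a,b) =
    (\<Sum>x<m. \<Sum>y<m'. sc (L $$ (a,x) * R $$ (y,b)) (\<Sum>i<n1. \<Sum>j<n2. sc (L' $$ (x,i) * R' $$ (j,y)) (A $$ (i,j))))"
    using a b L R L' R' A by (simp add: triple_entry)
  also have "\<dots> = (\<Sum>x<m. \<Sum>y<m'. \<Sum>i<n1. \<Sum>j<n2. sc (L $$ (a,x) * R $$ (y,b) * (L' $$ (x,i) * R' $$ (j,y))) (A $$ (i,j)))"
    by (simp add: sc_sum sc_mult)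
  also have "\<dots> = (\<Sum>i<n1. \<Sum>j<n2. \<Sum>x<m. \<Sum>y<m'. sc (L $$ (a,x) * R $$ (y,b) * (L' $$ (x,i) * R' $$ (j,y))) (A $$ (i,j)))"
  proof -
    have "(\<Sum>x<m. \<Sum>y<m'. \<Sum>i<n1. \<Sum>j<n2. sc (L $$ (a,x) * R $$ (y,b) * (L' $$ (x,i) * R' $$ (j,y))) (A $$ (i,j)))
      = (\<Sum>x<m. \<Sum>i<n1. \<Sum>y<m'. \<Sum>j<n2. sc (L $$ (a,x) * R $$ (y,b) * (L' $$ (x,i) * R' $$ (j,y))) (A $$ (i,j)))"
      by (rule sum.cong[OF refl], rule sum.swap)
    also have "\<dots> = (\<Sum>i<n1. \<Sum>x<m. \<Sum>y<m'. \<Sum>j<n2. sc (L $$ (a,x) * R $$ (y,b) * (L' $$ (x,i) * R' $$ (j,y))) (A $$ (i,j)))"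
      by (rule sum.swap)
    also have "\<dots> = (\<Sum>i<n1. \<Sum>x<m. \<Sum>j<n2. \<Sum>y<m'. sc (L $$ (a,x) * R $$ (y,b) * (L' $$ (x,i) * R' $$ (j,y))) (A $$ (i,j)))"
      by (rule sum.cong[OF refl], rule sum.cong[OF refl], rule sum.swap)
    also have "\<dots> = (\<Sum>i<n1. \<Sum>j<n2. \<Sum>x<m. \<Sum>y<m'. sc (L $$ (a,x) * R $$ (y,b) * (L' $$ (x,i) * R' $$ (j,y))) (A $$ (i,j)))"
      by (rule sum.cong[OF refl], rule sum.swap)
    finally show ?thesis .
  qed
  also have "\<dots> = (\<Sum>i<n1. \<Sum>j<n2. sc ((\<Sum>x<m. L $$ (a,x) * L' $$ (x,i)) * (\<Sum>y<m'. R' $$ (j,y) * R $$ (y,b))) (A $$ (i,j)))"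
    by (simp add: sum_product sc_sum2 ac_simps)
  also have "\<dots> = vmat_triple sc (L * L') A (R' * R) $$ (a,b)"
  proof -
    have e: "vmat_triple sc (L*L') A (R'*R) $$ (a,b) = (\<Sum>i<n1. \<Sum>j<n2. sc ((L*L')$$(a,i) * (R'*R)$$(j,b)) (A$$(i,j)))"
      using a b L R L' R' A by (subst triple_entry) auto
    show ?thesis unfolding e
      by (intro sum.cong refl, simp add: mult_entry[OF L L'] mult_entry[OF R' R] a b del: index_mult_mat)
  qed
  finally show "vmat_triple sc L (vmat_triple sc L' A R') R $$ (a,b) = vmat_triple sc (L * L') A (R' * R) $$ (a,b)" .
qed (use L R in auto)

end


lemma sum_split: "(\<Sum>i<a+(b::nat). f i) = (\<Sum>i<a. f i) + (\<Sum>i<b. f (a+i))"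
  by (induction b) (auto simp: add.assoc)

lemma ip_append: assumes "a \<in> carrier_vec n" "b \<in> carrier_vec n" "d \<in> carrier_vec m" "e \<in> carrier_vec m"
  shows "ip (a @\<^sub>v d) (b @\<^sub>v e) = ip a b + ip d e"
  unfolding ip_def using assms by (simp add: sum_split)

lemma dsum_dims[simp]: "dim_row (direct_sum P Q) = dim_row P + dim_row Q" "dim_col (direct_sum P Q) = dim_col P + dim_col Q"
  unfolding direct_sum_def by auto

lemma dsum_eq: "P \<in> carrier_mat n n' \<Longrightarrow> Q \<in> carrier_mat m m' \<Longrightarrow>
  direct_sum P Q = four_block_mat P (0\<^sub>m n m') (0\<^sub>m m n') Q"
  unfolding direct_sum_def by auto

lemma dsum_carrier[simp]: "P \<in> carrier_mat n n \<Longrightarrow> Q \<in> carrier_mat m m \<Longrightarrow> direct_sum P Q \<in> carrier_mat (n+m) (n+m)"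
  unfolding direct_sum_def by auto

lemma dsum_mv: assumes "P \<in> carrier_mat n n" "Q \<in> carrier_mat m m" "a \<in> carrier_vec n" "d \<in> carrier_vec m"
  shows "direct_sum P Q *\<^sub>v (a @\<^sub>v d) = (P *\<^sub>v a) @\<^sub>v (Q *\<^sub>v d)"
  unfolding direct_sum_def using mult_mat_vec_split[OF assms] assms by auto

lemma qf_dsum: assumes "P \<in> carrier_mat n n" "Q \<in> carrier_mat m m" "a \<in> carrier_vec n" "d \<in> carrier_vec m"
  shows "qf (direct_sum P Q) (a @\<^sub>v d) = qf P a + qf Q d"
  unfolding qf_def dsum_mv[OF assms] using assms by (intro ip_append) auto

lemma adj_dsum: assumes "(P :: complex mat) \<in> carrier_mat n n" "Q \<in> carrier_mat m m"
  shows "mat_adjoint (direct_sum P Q) = direct_sum (mat_adjoint P) (mat_adjoint Q)"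
  unfolding direct_sum_def by (rule eq_matI, use assms in auto)

lemma mult_dsum: assumes "(P :: complex mat) \<in> carrier_mat n n" "Q \<in> carrier_mat m m"
  "P' \<in> carrier_mat n n" "Q' \<in> carrier_mat m m"
  shows "direct_sum P Q * direct_sum P' Q' = direct_sum (P * P') (Q * Q')"
proof -
  have "direct_sum P Q * direct_sum P' Q' = four_block_mat (P * P' + 0\<^sub>m n m * 0\<^sub>m m n) (P * 0\<^sub>m n m + 0\<^sub>m n m * Q')
    (0\<^sub>m m n * P' + Q * 0\<^sub>m m n) (0\<^sub>m m n * 0\<^sub>m n m + Q * Q')"
    unfolding dsum_eq[OF assms(1,2)] dsum_eq[OF assms(3,4)] using assms by (intro mult_four_block_mat) auto
  also have "\<dots> = direct_sum (P * P') (Q * Q')" using assms by (subst dsum_eq[of _ n n _ m m]) auto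
  finally show ?thesis .
qed

lemma dsum_one: "direct_sum (1\<^sub>m n) (1\<^sub>m m) = (1\<^sub>m (n+m) :: complex mat)"
  unfolding direct_sum_def by simp

lemma shift_dsum: assumes "(X :: complex mat) \<in> carrier_mat n n" "Y \<in> carrier_mat m m"
  shows "shiftm (n+m) t (direct_sum X Y) = direct_sum (shiftm n t X) (shiftm m t Y)"
  unfolding shiftm_def direct_sum_def by (rule eq_matI, use assms in auto)

lemma dsum_index: assumes "(P :: complex mat) \<in> carrier_mat n n" "Q \<in> carrier_mat m m"
  shows "\<And>i j. i < n \<Longrightarrow> j < n \<Longrightarrow> direct_sum P Q $$ (i,j) = P $$ (i,j)"
    "\<And>i j. i < m \<Longrightarrow> j < m \<Longrightarrow> direct_sum P Q $$ (n+i,n+j) = Q $$ (i,j)"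
  unfolding direct_sum_def using assms by auto

lemma dsum_sa: assumes "(P :: complex mat) \<in> carrier_mat n n" "Q \<in> carrier_mat m m"
  shows "direct_sum P Q \<in> cmat_sa (n+m) \<longleftrightarrow> P \<in> cmat_sa n \<and> Q \<in> cmat_sa m"
proof
  assume h: "direct_sum P Q \<in> cmat_sa (n+m)"
  hence e: "direct_sum (mat_adjoint P) (mat_adjoint Q) = direct_sum P Q" using adj_dsum[OF assms] unfolding cmat_sa_def by auto
  have "mat_adjoint P = P"
  proof (rule eq_matI)
    fix i j assume "i < dim_row P" "j < dim_col P" hence ij: "i < n" "j < n" using assms by auto
    show "mat_adjoint P $$ (i,j) = P $$ (i,j)"
      using arg_cong[OF e, of "\<lambda>M. M $$ (i,j)"] dsum_index(1)[OF assms ij] dsum_index(1)[of "mat_adjoint P" n "mat_adjoint Q" m i j] assms ij by auto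
  qed (use assms in auto)
  moreover have "mat_adjoint Q = Q"
  proof (rule eq_matI)
    fix i j assume "i < dim_row Q" "j < dim_col Q" hence ij: "i < m" "j < m" using assms by auto
    show "mat_adjoint Q $$ (i,j) = Q $$ (i,j)"
      using arg_cong[OF e, of "\<lambda>M. M $$ (n+i,n+j)"] dsum_index(2)[OF assms ij] dsum_index(2)[of "mat_adjoint P" n "mat_adjoint Q" m i j] assms ij by auto
  qed (use assms in auto)
  ultimately show "P \<in> cmat_sa n \<and> Q \<in> cmat_sa m" using assms unfolding cmat_sa_def by auto
next
  assume "P \<in> cmat_sa n \<and> Q \<in> cmat_sa m"
  thus "direct_sum P Q \<in> cmat_sa (n+m)" unfolding cmat_sa_def using adj_dsum[OF assms] assms by auto
qed

lemma pos_dsum: assumes "(P :: complex mat) \<in> carrier_mat n n" "Q \<in> carrier_mat m m"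
  shows "cmat_pos (n+m) (direct_sum P Q) \<longleftrightarrow> cmat_pos n P \<and> cmat_pos m Q"
proof
  assume h: "cmat_pos (n+m) (direct_sum P Q)"
  have sa: "P \<in> cmat_sa n" "Q \<in> cmat_sa m" using h dsum_sa[OF assms] unfolding cmat_pos_qf by auto
  have q: "\<And>v. v \<in> carrier_vec (n+m) \<Longrightarrow> 0 \<le> Re (qf (direct_sum P Q) v)" using h unfolding cmat_pos_qf by auto
  have qz: "\<And>k (M :: complex mat). M \<in> carrier_mat k k \<Longrightarrow> qf M (0\<^sub>v k) = 0" unfolding qf_def ip_def by simp
  have "\<forall>a\<in>carrier_vec n. 0 \<le> Re (qf P a)"
  proof
    fix a :: "complex vec" assume a: "a \<in> carrier_vec n"
    have "qf (direct_sum P Q) (a @\<^sub>v 0\<^sub>v m) = qf P a" using qf_dsum[OF assms a, of "0\<^sub>v m"] qz[OF assms(2)] by simp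
    thus "0 \<le> Re (qf P a)" using q[of "a @\<^sub>v 0\<^sub>v m"] a by auto
  qed
  moreover have "\<forall>d\<in>carrier_vec m. 0 \<le> Re (qf Q d)"
  proof
    fix d :: "complex vec" assume d: "d \<in> carrier_vec m"
    have "qf (direct_sum P Q) (0\<^sub>v n @\<^sub>v d) = qf Q d" using qf_dsum[OF assms _ d, of "0\<^sub>v n"] qz[OF assms(1)] by simp
    thus "0 \<le> Re (qf Q d)" using q[of "0\<^sub>v n @\<^sub>v d"] d by auto
  qed
  ultimately show "cmat_pos n P \<and> cmat_pos m Q" using sa unfolding cmat_pos_qf by auto
next
  assume h: "cmat_pos n P \<and> cmat_pos m Q"
  have sa: "direct_sum P Q \<in> cmat_sa (n+m)" using h dsum_sa[OF assms] unfolding cmat_pos_qf by auto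
  have "\<forall>v\<in>carrier_vec (n+m). 0 \<le> Re (qf (direct_sum P Q) v)"
  proof
    fix v :: "complex vec" assume v: "v \<in> carrier_vec (n+m)"
    have "v = vec_first v n @\<^sub>v vec_last v m" using v by simp
    hence "qf (direct_sum P Q) v = qf P (vec_first v n) + qf Q (vec_last v m)"
      using qf_dsum[OF assms vec_first_carrier vec_last_carrier] by metis
    thus "0 \<le> Re (qf (direct_sum P Q) v)" using h unfolding cmat_pos_qf by auto
  qed
  thus "cmat_pos (n+m) (direct_sum P Q)" using sa unfolding cmat_pos_qf by auto
qed

lemma append_zero_iff: assumes "a \<in> carrier_vec n" "d \<in> carrier_vec m"
  shows "a @\<^sub>v d = 0\<^sub>v (n+m) \<longleftrightarrow> a = 0\<^sub>v n \<and> (d :: complex vec) = 0\<^sub>v m"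
proof
  assume h: "a @\<^sub>v d = 0\<^sub>v (n+m)"
  have "a = 0\<^sub>v n"
  proof (rule eq_vecI)
    fix i assume "i < dim_vec (0\<^sub>v n :: complex vec)" hence i: "i < n" by simp
    show "a $ i = 0\<^sub>v n $ i" using arg_cong[OF h, of "\<lambda>v. v $ i"] i assms by simp
  qed (use assms in auto)
  moreover have "d = 0\<^sub>v m"
  proof (rule eq_vecI)
    fix i assume "i < dim_vec (0\<^sub>v m :: complex vec)" hence i: "i < m" by simp
    show "d $ i = 0\<^sub>v m $ i" using arg_cong[OF h, of "\<lambda>v. v $ (n+i)"] i assms by simp
  qed (use assms in auto)
  ultimately show "a = 0\<^sub>v n \<and> d = 0\<^sub>v m" by simp
next
  assume "a = 0\<^sub>v n \<and> d = 0\<^sub>v m"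
  thus "a @\<^sub>v d = 0\<^sub>v (n+m)" by (intro eq_vecI) auto
qed

lemma pd_dsum: assumes "(P :: complex mat) \<in> carrier_mat n n" "Q \<in> carrier_mat m m"
  shows "cmat_pd (n+m) (direct_sum P Q) \<longleftrightarrow> cmat_pd n P \<and> cmat_pd m Q"
proof
  assume h: "cmat_pd (n+m) (direct_sum P Q)"
  have inv: "invertible_mat (direct_sum P Q)" using h unfolding cmat_pd_def by auto
  have Dc: "direct_sum P Q \<in> carrier_mat (n+m) (n+m)" using assms by simp
  have "invertible_mat P"
  proof (rule inv_kernel[OF assms(1)])
    fix a assume a: "a \<in> carrier_vec n" and Pa: "P *\<^sub>v a = 0\<^sub>v n"
    have "direct_sum P Q *\<^sub>v (a @\<^sub>v 0\<^sub>v m) = 0\<^sub>v (n+m)"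
      unfolding dsum_mv[OF assms a zero_carrier_vec] Pa mult_zero_vec'[OF assms(2)]
      by (simp add: append_zero_iff)
    hence "a @\<^sub>v 0\<^sub>v m = 0\<^sub>v (n+m)" using invertible_kernel[OF inv Dc] a by auto
    thus "a = 0\<^sub>v n" using append_zero_iff[OF a, of "0\<^sub>v m" m] by simp
  qed
  moreover have "invertible_mat Q"
  proof (rule inv_kernel[OF assms(2)])
    fix d assume d: "d \<in> carrier_vec m" and Qd: "Q *\<^sub>v d = 0\<^sub>v m"
    have "direct_sum P Q *\<^sub>v (0\<^sub>v n @\<^sub>v d) = 0\<^sub>v (n+m)"
      unfolding dsum_mv[OF assms zero_carrier_vec d] Qd mult_zero_vec'[OF assms(1)]
      by (simp add: append_zero_iff)
    hence "0\<^sub>v n @\<^sub>v d = 0\<^sub>v (n+m)" using invertible_kernel[OF inv Dc] d by auto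
    thus "d = 0\<^sub>v m" using append_zero_iff[OF zero_carrier_vec d, of n] by simp
  qed
  ultimately show "cmat_pd n P \<and> cmat_pd m Q" using h pos_dsum[OF assms] unfolding cmat_pd_def by auto
next
  assume h: "cmat_pd n P \<and> cmat_pd m Q"
  hence iP: "invertible_mat P" and iQ: "invertible_mat Q" unfolding cmat_pd_def by auto
  obtain P' where P': "P' \<in> carrier_mat n n" "P * P' = 1\<^sub>m n" "P' * P = 1\<^sub>m n" using inv_ex[OF iP assms(1)] by auto
  obtain Q' where Q': "Q' \<in> carrier_mat m m" "Q * Q' = 1\<^sub>m m" "Q' * Q = 1\<^sub>m m" using inv_ex[OF iQ assms(2)] by auto
  have "direct_sum P Q * direct_sum P' Q' = 1\<^sub>m (n+m)" "direct_sum P' Q' * direct_sum P Q = 1\<^sub>m (n+m)"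
    using mult_dsum[OF assms P'(1) Q'(1)] mult_dsum[OF P'(1) Q'(1) assms] P' Q' dsum_one by auto
  hence "invertible_mat (direct_sum P Q)" unfolding invertible_mat_def inverts_mat_def using assms P'(1) Q'(1)
    by (intro conjI exI[of _ "direct_sum P' Q'"]) (auto simp: square_mat.simps)
  thus "cmat_pd (n+m) (direct_sum P Q)" using h pos_dsum[OF assms] unfolding cmat_pd_def by auto
qed

lemma sqrt_dsum: assumes "cmat_pos n P" "cmat_pos m Q"
  shows "cmat_sqrt (n+m) (direct_sum P Q) = direct_sum (cmat_sqrt n P) (cmat_sqrt m Q)"
proof -
  have Pc: "P \<in> carrier_mat n n" and Qc: "Q \<in> carrier_mat m m" using assms unfolding cmat_pos_def cmat_sa_def by auto
  note sP = sqrt_props[OF assms(1)] and sQ = sqrt_props[OF assms(2)]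
  have sPc: "cmat_sqrt n P \<in> carrier_mat n n" and sQc: "cmat_sqrt m Q \<in> carrier_mat m m"
    using sP sQ unfolding cmat_pos_def cmat_sa_def by auto
  have D: "cmat_pos (n+m) (direct_sum P Q)" using pos_dsum[OF Pc Qc] assms by simp
  note sD = sqrt_props[OF D]
  have "cmat_pos (n+m) (direct_sum (cmat_sqrt n P) (cmat_sqrt m Q))" using pos_dsum[OF sPc sQc] sP sQ by simp
  moreover have "direct_sum (cmat_sqrt n P) (cmat_sqrt m Q) * direct_sum (cmat_sqrt n P) (cmat_sqrt m Q) = direct_sum P Q"
    using mult_dsum[OF sPc sQc sPc sQc] sP sQ by simp
  ultimately show ?thesis using psd_sqrt_unique[OF sD(1)] sD(2) by metis
qed

lemma inv_dsum: assumes "cmat_pd n P" "cmat_pd m Q"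
  shows "cmat_inv (n+m) (direct_sum P Q) = direct_sum (cmat_inv n P) (cmat_inv m Q)"
proof -
  have Pc: "P \<in> carrier_mat n n" and Qc: "Q \<in> carrier_mat m m" using assms unfolding cmat_pd_def cmat_pos_def cmat_sa_def by auto
  note iP = invsqrt_props[OF assms(1)] and iQ = invsqrt_props[OF assms(2)]
  show ?thesis
    by (rule inv_unique, use Pc Qc iP iQ mult_dsum[OF Pc Qc iP(8) iQ(8)] mult_dsum[OF iP(8) iQ(8) Pc Qc] dsum_one in auto)
qed

lemma invsqrt_dsum: assumes "cmat_pd n P" "cmat_pd m Q"
  shows "cmat_invsqrt (n+m) (direct_sum P Q) = direct_sum (cmat_invsqrt n P) (cmat_invsqrt m Q)"
proof -
  have a: "cmat_pos n (cmat_inv n P)" "cmat_pos m (cmat_inv m Q)" using pd_inv[OF assms(1)] pd_inv[OF assms(2)]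
    unfolding cmat_pd_def by auto
  show ?thesis unfolding cmat_invsqrt_def inv_dsum[OF assms] sqrt_dsum[OF a] ..
qed


context
  fixes sc :: "complex \<Rightarrow> 'v::ab_group_add \<Rightarrow> 'v" and st :: "'v \<Rightarrow> 'v"
  assumes cs: "cstar_space sc st"
begin

lemmas tdims[simp] = triple_dims[OF cs] triple_carrier[OF cs]

lemma vsa_entry: assumes "A \<in> vmat_sa st n" "i < n" "j < n" shows "A $$ (i,j) = st (A $$ (j,i))"
proof -
  have A: "A \<in> carrier_mat n n" "vmat_star st A = A" using assms unfolding vmat_sa_def by auto
  have "A $$ (i,j) = vmat_star st A $$ (i,j)" using A by simp
  also have "\<dots> = st (A $$ (j,i))" unfolding vmat_star_def using A assms by auto
  finally show ?thesis .
qed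

lemma triple_sa: assumes A: "A \<in> vmat_sa st n" and R: "R \<in> carrier_mat n k"
  shows "vmat_triple sc (mat_adjoint R) A R \<in> vmat_sa st k"
proof -
  have Ac: "A \<in> carrier_mat n n" using A unfolding vmat_sa_def by auto
  define T where "T = vmat_triple sc (mat_adjoint R) A R"
  have T: "T \<in> carrier_mat k k" unfolding T_def using R by auto
  have Te: "\<And>p q. p < k \<Longrightarrow> q < k \<Longrightarrow> T $$ (p,q) = (\<Sum>i<n. \<Sum>j<n. sc (cnj (R $$ (i,p)) * R $$ (j,q)) (A $$ (i,j)))"
    unfolding T_def using R Ac by (subst triple_entry[OF cs]) auto
  have "vmat_star st T = T"
  proof (rule eq_matI)
    fix p q assume "p < dim_row T" "q < dim_col T" hence p: "p < k" and q: "q < k" using T by auto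
    have "vmat_star st T $$ (p,q) = st (T $$ (q,p))" unfolding vmat_star_def using T p q by auto
    also have "\<dots> = (\<Sum>i<n. \<Sum>j<n. sc (cnj (cnj (R $$ (i,q)) * R $$ (j,p))) (st (A $$ (i,j))))"
      unfolding Te[OF q p] by (simp add: st_sum[OF cs] st_sc[OF cs])
    also have "\<dots> = (\<Sum>i<n. \<Sum>j<n. sc (cnj (R $$ (j,p)) * R $$ (i,q)) (A $$ (j,i)))"
      by (intro sum.cong refl, simp add: vsa_entry[OF A, symmetric] mult.commute)
    also have "\<dots> = (\<Sum>j<n. \<Sum>i<n. sc (cnj (R $$ (j,p)) * R $$ (i,q)) (A $$ (j,i)))"
      by (rule sum.swap)
    also have "\<dots> = T $$ (p,q)" unfolding Te[OF p q] ..
    finally show "vmat_star st T $$ (p,q) = T $$ (p,q)" .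
  qed (use T in \<open>auto simp: vmat_star_def\<close>)
  thus ?thesis unfolding vmat_sa_def T_def[symmetric] using T by auto
qed

lemma triple_zero: "vmat_triple sc L (0\<^sub>m n m) R = 0\<^sub>m (dim_row L) (dim_col R)"
  by (rule eq_matI, auto simp: vmat_triple_def sc_zero[OF cs])

lemma zero_sa: "0\<^sub>m n n \<in> vmat_sa st n"
  unfolding vmat_sa_def vmat_star_def by (auto intro!: eq_matI simp: st_zero[OF cs])

lemma rscale_zero: "vmat_rscale sc t (0\<^sub>m n m) = 0\<^sub>m n m"
  unfolding vmat_rscale_def by (rule eq_matI, auto simp: sc_zero[OF cs])

lemma triple_dsum: assumes L1: "L1 \<in> carrier_mat k1 n1" and L2: "L2 \<in> carrier_mat k2 n2"
  and A: "A \<in> carrier_mat n1 n1" and B: "B \<in> carrier_mat n2 n2"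
  and R1: "R1 \<in> carrier_mat n1 k1" and R2: "R2 \<in> carrier_mat n2 k2"
  shows "vmat_triple sc (direct_sum L1 L2) (direct_sum A B) (direct_sum R1 R2) =
    direct_sum (vmat_triple sc L1 A R1) (vmat_triple sc L2 B R2)"
proof (rule eq_matI)
  fix p q assume "p < dim_row (direct_sum (vmat_triple sc L1 A R1) (vmat_triple sc L2 B R2))"
    "q < dim_col (direct_sum (vmat_triple sc L1 A R1) (vmat_triple sc L2 B R2))"
  hence p: "p < k1 + k2" and q: "q < k1 + k2" using L1 L2 R1 R2 by auto
  define L where "L = direct_sum L1 L2"
  define R where "R = direct_sum R1 R2"
  define M where "M = direct_sum A B"
  have Le: "L = four_block_mat L1 (0\<^sub>m k1 n2) (0\<^sub>m k2 n1) L2" unfolding L_def by (rule dsum_eq[OF L1 L2])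
  have Re: "R = four_block_mat R1 (0\<^sub>m n1 k2) (0\<^sub>m n2 k1) R2" unfolding R_def by (rule dsum_eq[OF R1 R2])
  have Me: "M = four_block_mat A (0\<^sub>m n1 n2) (0\<^sub>m n2 n1) B" unfolding M_def by (rule dsum_eq[OF A B])
  define f where "f = (\<lambda>i j. sc (L $$ (p,i) * R $$ (j,q)) (M $$ (i,j)))"
  have "vmat_triple sc L M R $$ (p,q) = (\<Sum>i<n1+n2. \<Sum>j<n1+n2. f i j)"
    unfolding f_def using p q L1 L2 R1 R2 A B unfolding Le Re Me by (subst triple_entry[OF cs]) auto
  also have "\<dots> = (\<Sum>i<n1. \<Sum>j<n1. f i j) + (\<Sum>i<n1. \<Sum>j<n2. f i (n1+j))
     + ((\<Sum>i<n2. \<Sum>j<n1. f (n1+i) j) + (\<Sum>i<n2. \<Sum>j<n2. f (n1+i) (n1+j)))"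
    by (simp add: sum_split sum.distrib)
  also have "(\<Sum>i<n1. \<Sum>j<n2. f i (n1+j)) = 0"
    unfolding f_def Me using A B by (intro sum.neutral ballI) (auto simp: sc_zero[OF cs])
  also have "(\<Sum>i<n2. \<Sum>j<n1. f (n1+i) j) = 0"
    unfolding f_def Me using A B by (intro sum.neutral ballI) (auto simp: sc_zero[OF cs])
  finally have e: "vmat_triple sc L M R $$ (p,q) = (\<Sum>i<n1. \<Sum>j<n1. f i j) + (\<Sum>i<n2. \<Sum>j<n2. f (n1+i) (n1+j))"
    by simp
  have fA: "\<And>i j. i < n1 \<Longrightarrow> j < n1 \<Longrightarrow> f i j = sc (L $$ (p,i) * R $$ (j,q)) (A $$ (i,j))"
    unfolding f_def Me using A B by auto
  have fB: "\<And>i j. i < n2 \<Longrightarrow> j < n2 \<Longrightarrow> f (n1+i) (n1+j) = sc (L $$ (p,n1+i) * R $$ (n1+j,q)) (B $$ (i,j))"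
    unfolding f_def Me using A B by auto
  show "vmat_triple sc L M R $$ (p,q) = direct_sum (vmat_triple sc L1 A R1) (vmat_triple sc L2 B R2) $$ (p,q)"
  proof (cases "p < k1")
    case pk: True
    show ?thesis
    proof (cases "q < k1")
      case qk: True
      have "(\<Sum>i<n2. \<Sum>j<n2. f (n1+i) (n1+j)) = 0"
        using fB pk p L1 L2 unfolding Le by (intro sum.neutral ballI) (auto simp: sc_zero2[OF cs])
      moreover have "(\<Sum>i<n1. \<Sum>j<n1. f i j) = vmat_triple sc L1 A R1 $$ (p,q)"
        using fA pk qk L1 L2 R1 R2 A unfolding Le Re by (subst triple_entry[OF cs]) (auto intro!: sum.cong)
      ultimately show ?thesis unfolding e using pk qk L1 R1 by (simp add: dsum_eq[OF triple_carrier[OF cs] triple_carrier[OF cs]])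
    next
      case qk: False
      have "(\<Sum>i<n2. \<Sum>j<n2. f (n1+i) (n1+j)) = 0"
        using fB pk p L1 L2 unfolding Le by (intro sum.neutral ballI) (auto simp: sc_zero2[OF cs])
      moreover have "(\<Sum>i<n1. \<Sum>j<n1. f i j) = 0"
        using fA qk q R1 R2 unfolding Re by (intro sum.neutral ballI) (auto simp: sc_zero2[OF cs])
      ultimately show ?thesis unfolding e using pk qk q L1 L2 R1 R2 by (simp add: dsum_eq[OF triple_carrier[OF cs] triple_carrier[OF cs]])
    qed
  next
    case pk: False
    show ?thesis
    proof (cases "q < k1")
      case qk: True
      have "(\<Sum>i<n2. \<Sum>j<n2. f (n1+i) (n1+j)) = 0"
        using fB qk q R1 R2 unfolding Re by (intro sum.neutral ballI) (auto simp: sc_zero2[OF cs])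
      moreover have "(\<Sum>i<n1. \<Sum>j<n1. f i j) = 0"
        using fA pk p L1 L2 unfolding Le by (intro sum.neutral ballI) (auto simp: sc_zero2[OF cs])
      ultimately show ?thesis unfolding e using pk qk p L1 L2 R1 R2 by (simp add: dsum_eq[OF triple_carrier[OF cs] triple_carrier[OF cs]])
    next
      case qk: False
      have "(\<Sum>i<n1. \<Sum>j<n1. f i j) = 0"
        using fA pk p L1 L2 unfolding Le by (intro sum.neutral ballI) (auto simp: sc_zero2[OF cs])
      moreover have "(\<Sum>i<n2. \<Sum>j<n2. f (n1+i) (n1+j)) = vmat_triple sc L2 B R2 $$ (p - k1, q - k1)"
        using fB pk qk p q L1 L2 R1 R2 B unfolding Le Re by (subst triple_entry[OF cs]) (auto intro!: sum.cong)
      ultimately show ?thesis unfolding e using pk qk p q L1 L2 R1 R2 by (simp add: dsum_eq[OF triple_carrier[OF cs] triple_carrier[OF cs]])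
    qed
  qed
qed (use L1 L2 R1 R2 in auto)

end


lemma shift_carrier[simp]: "X \<in> carrier_mat n n \<Longrightarrow> shiftm n t X \<in> carrier_mat n n"
  unfolding shiftm_def by auto

lemma herm_entry: assumes "X \<in> carrier_mat n n" "mat_adjoint X = X" "i < n" "j < n"
  shows "cnj (X $$ (j,i)) = X $$ (i,j)"
proof -
  have "mat_adjoint X $$ (i,j) = cnj (X $$ (j,i))" using assms by (intro adj_index) auto
  thus ?thesis using assms by simp
qed

lemma shift_adj: "X \<in> carrier_mat n n \<Longrightarrow> mat_adjoint X = X \<Longrightarrow> mat_adjoint (shiftm n t X) = shiftm n t X"
  unfolding shiftm_def by (rule eq_matI) (auto simp: herm_entry)

lemma qf_shift: assumes "X \<in> carrier_mat n n" "v \<in> carrier_vec n"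
  shows "qf (shiftm n t X) v = complex_of_real (t * nsq v) - qf X v"
  unfolding shiftm_def using assms
  by (simp add: qf_minus[of _ n] qf_smult[of _ n] qf_one)

lemma qf_real_sa: assumes "X \<in> cmat_sa n" "v \<in> carrier_vec n"
  shows "qf X v = complex_of_real (Re (qf X v))"
  using assms qf_herm_real[of X n v] unfolding cmat_sa_def by auto

lemma Re_qf_shift: assumes "X \<in> carrier_mat n n" "v \<in> carrier_vec n"
  shows "Re (qf (shiftm n t X) v) = t * nsq v - Re (qf X v)"
  using qf_shift[OF assms] by simp

lemma qf_bound: assumes X: "X \<in> carrier_mat n n"
  shows "\<exists>c\<ge>0. \<forall>v\<in>carrier_vec n. Re (qf X v) \<le> c * nsq v"
proof -
  define c where "c = (\<Sum>i<n. \<Sum>j<n. cmod (X $$ (i,j)))"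
  have c0: "0 \<le> c" unfolding c_def by (auto intro!: sum_nonneg)
  have "\<forall>v\<in>carrier_vec n. Re (qf X v) \<le> c * nsq v"
  proof
    fix v :: "complex vec" assume v: "v \<in> carrier_vec n"
    have qe: "qf X v = (\<Sum>i<n. \<Sum>j<n. cnj (v $ i) * (X $$ (i,j) * v $ j))"
      unfolding qf_def ip_def using v X mv_entry[OF X v] by (auto simp: sum_distrib_left simp del: index_mult_mat_vec intro!: sum.cong)
    have "Re (qf X v) \<le> cmod (qf X v)" by (rule complex_Re_le_cmod)
    also have "\<dots> \<le> (\<Sum>i<n. \<Sum>j<n. cmod (cnj (v $ i) * (X $$ (i,j) * v $ j)))"
      unfolding qe by (rule order.trans[OF norm_sum sum_mono], rule norm_sum)
    also have "\<dots> \<le> (\<Sum>i<n. \<Sum>j<n. cmod (X $$ (i,j)) * nsq v)"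
    proof (intro sum_mono)
      fix i j assume i: "i \<in> {..<n}" and j: "j \<in> {..<n}"
      have a: "cmod (v $ i) \<le> sqrt (nsq v)" "cmod (v $ j) \<le> sqrt (nsq v)"
        using entry_le_norm[OF v] i j by auto
      have "cmod (v $ i) * cmod (v $ j) \<le> sqrt (nsq v) * sqrt (nsq v)"
        using a nsq_nonneg[of v] by (intro mult_mono) auto
      also have "\<dots> = nsq v" using nsq_nonneg[of v] by simp
      finally have "cmod (v $ i) * cmod (v $ j) \<le> nsq v" .
      hence "cmod (X $$ (i,j)) * (cmod (v $ i) * cmod (v $ j)) \<le> cmod (X $$ (i,j)) * nsq v"
        by (intro mult_left_mono) auto
      thus "cmod (cnj (v $ i) * (X $$ (i,j) * v $ j)) \<le> cmod (X $$ (i,j)) * nsq v"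
        by (simp add: norm_mult ac_simps)
    qed
    also have "\<dots> = c * nsq v" unfolding c_def by (simp add: sum_distrib_right)
    finally show "Re (qf X v) \<le> c * nsq v" .
  qed
  thus ?thesis using c0 by blast
qed

lemma nsq_diff: assumes "v \<in> carrier_vec n" "w \<in> carrier_vec n"
  shows "complex_of_real (nsq (v - complex_of_real a \<cdot>\<^sub>v w)) =
     complex_of_real (nsq v) - complex_of_real a * ip v w - complex_of_real a * ip w v + complex_of_real (a * a * nsq w)"
proof -
  have c: "complex_of_real a \<cdot>\<^sub>v w \<in> carrier_vec n" using assms by auto
  have "complex_of_real (nsq (v - complex_of_real a \<cdot>\<^sub>v w)) = ip (v - complex_of_real a \<cdot>\<^sub>v w) (v - complex_of_real a \<cdot>\<^sub>v w)"
    by (simp add: ip_self)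
  also have "\<dots> = ip v v - ip v (complex_of_real a \<cdot>\<^sub>v w) - (ip (complex_of_real a \<cdot>\<^sub>v w) v - ip (complex_of_real a \<cdot>\<^sub>v w) (complex_of_real a \<cdot>\<^sub>v w))"
    using assms c by (simp add: ip_minus_left[of _ n] ip_minus_right[of _ n])
  also have "\<dots> = complex_of_real (nsq v) - complex_of_real a * ip v w - complex_of_real a * ip w v + complex_of_real (a * a * nsq w)"
    using assms by (simp add: ip_smult_left[of _ n] ip_smult_right[of _ n] ip_self nsq_smult_real power2_eq_square)
  finally show ?thesis .
qed


lemma rassoc: assumes "A * B = C" "A \<in> carrier_mat n n" "B \<in> carrier_mat n n" "M \<in> carrier_mat n k"
  shows "A * (B * M) = C * (M :: complex mat)"
  using assms assoc_mult_mat[of A n n B n M k] by simp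

lemma qf_zero_vec: "M \<in> carrier_mat n n \<Longrightarrow> qf M (0\<^sub>v n) = 0"
  unfolding qf_def ip_def by simp

lemma qf_of_zero: "v \<in> carrier_vec n \<Longrightarrow> M *\<^sub>v v = 0\<^sub>v n \<Longrightarrow> qf M v = 0"
  unfolding qf_def ip_def by simp

context
  fixes sc :: "complex \<Rightarrow> 'v::ab_group_add \<Rightarrow> 'v" and st :: "'v \<Rightarrow> 'v"
    and \<nu> :: "nat \<Rightarrow> 'v mat \<Rightarrow> real"
  assumes mos: "is_LinfMOS sc st \<nu>"
begin

lemma cs: "cstar_space sc st" using mos unfolding is_LinfMOS_def by auto

lemma gnn: "n \<ge> 1 \<Longrightarrow> A \<in> vmat_sa st n \<Longrightarrow> 0 \<le> \<nu> n A"
  using mos unfolding is_LinfMOS_def proper_gauge_on_def by auto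

lemma ghom: "n \<ge> 1 \<Longrightarrow> A \<in> vmat_sa st n \<Longrightarrow> t > 0 \<Longrightarrow> \<nu> n (vmat_rscale sc t A) = t * \<nu> n A"
  using mos unfolding is_LinfMOS_def proper_gauge_on_def by auto

lemma compat: "n \<ge> 1 \<Longrightarrow> k \<ge> 1 \<Longrightarrow> A \<in> vmat_sa st n \<Longrightarrow> X \<in> carrier_mat n k \<Longrightarrow>
  \<nu> k (vmat_triple sc (mat_adjoint X) A X) \<le> (op_norm X)\<^sup>2 * \<nu> n A"
  using mos unfolding is_LinfMOS_def by auto

lemma dsax: "n \<ge> 1 \<Longrightarrow> k \<ge> 1 \<Longrightarrow> A \<in> vmat_sa st n \<Longrightarrow> B \<in> vmat_sa st k \<Longrightarrow>
  \<nu> (n + k) (direct_sum A B) = max (\<nu> n A) (\<nu> k B)"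
  using mos unfolding is_LinfMOS_def by auto

lemma nu0: assumes "n \<ge> 1" shows "\<nu> n (0\<^sub>m n n) = 0"
proof -
  have "\<nu> n (vmat_rscale sc 2 (0\<^sub>m n n)) = 2 * \<nu> n (0\<^sub>m n n)" using ghom[OF assms zero_sa[OF cs]] by simp
  thus ?thesis unfolding rscale_zero[OF cs] by simp
qed

lemma tsa: "A \<in> vmat_sa st n \<Longrightarrow> R \<in> carrier_mat n k \<Longrightarrow> vmat_triple sc (mat_adjoint R) A R \<in> vmat_sa st k"
  by (rule triple_sa[OF cs])

lemma up_closed: assumes n: "n \<ge> 1" and A: "A \<in> vmat_sa st n" and X: "X \<in> cmat_sa n"
  and t: "t \<in> unit_set sc \<nu> n A X" and ts: "t \<le> s"
  shows "s \<in> unit_set sc \<nu> n A X"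
proof (cases "s = t")
  case True thus ?thesis using t by simp
next
  case False
  hence st: "t < s" using ts by simp
  have Xc: "X \<in> carrier_mat n n" and Xh: "mat_adjoint X = X" using X unfolding cmat_sa_def by auto
  have Ac: "A \<in> carrier_mat n n" using A unfolding vmat_sa_def by auto
  define P where "P = shiftm n t X"
  define Q where "Q = shiftm n s X"
  have t0: "t > 0" and Ppd: "cmat_pd n P"
    and nt: "\<nu> n (vmat_triple sc (cmat_invsqrt n P) A (cmat_invsqrt n P)) \<le> 1"
    using t unfolding unit_set_def P_def by auto
  have Pc: "P \<in> carrier_mat n n" and Qc: "Q \<in> carrier_mat n n" unfolding P_def Q_def using Xc by auto
  have Ph: "mat_adjoint P = P" and Qh: "mat_adjoint Q = Q" unfolding P_def Q_def using shift_adj[OF Xc Xh] by auto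
  have Pq: "\<And>v. v \<in> carrier_vec n \<Longrightarrow> 0 \<le> Re (qf P v)" using Ppd unfolding cmat_pd_def cmat_pos_qf by auto
  have PQ: "\<And>v. v \<in> carrier_vec n \<Longrightarrow> Re (qf Q v) = Re (qf P v) + (s - t) * nsq v"
    unfolding P_def Q_def using Xc by (simp add: Re_qf_shift algebra_simps)
  have Qpos: "cmat_pos n Q" 
  proof -
    have "\<forall>v\<in>carrier_vec n. 0 \<le> Re (qf Q v)"
    proof
      fix v :: "complex vec" assume v: "v \<in> carrier_vec n"
      have "0 \<le> (s - t) * nsq v" using st nsq_nonneg[of v] by simp
      thus "0 \<le> Re (qf Q v)" using PQ[OF v] Pq[OF v] by linarith
    qed
    thus ?thesis unfolding cmat_pos_qf cmat_sa_def using Qc Qh by auto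
  qed
  have "invertible_mat Q"
  proof (rule inv_kernel[OF Qc])
    fix v assume v: "v \<in> carrier_vec n" and Qv: "Q *\<^sub>v v = 0\<^sub>v n"
    have "Re (qf Q v) = 0" using qf_of_zero[OF v Qv] by simp
    hence "(s - t) * nsq v \<le> 0" using PQ[OF v] Pq[OF v] by simp
    hence "nsq v = 0" using st nsq_nonneg[of v] by (simp add: mult_le_0_iff)
    thus "v = 0\<^sub>v n" using nsq_zero[OF v] by simp
  qed
  hence Qpd: "cmat_pd n Q" using Qpos unfolding cmat_pd_def by simp
  define Rt where "Rt = cmat_invsqrt n P"
  define Rs where "Rs = cmat_invsqrt n Q"
  define Pi where "Pi = cmat_inv n P"
  note pt = invsqrt_props[OF Ppd, folded Rt_def Pi_def]
  note ps = invsqrt_props[OF Qpd, folded Rs_def]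
  have Rtc: "Rt \<in> carrier_mat n n" and Rsc: "Rs \<in> carrier_mat n n" and Pic: "Pi \<in> carrier_mat n n"
    using pt ps by auto
  have RR: "\<And>M k. M \<in> carrier_mat n k \<Longrightarrow> Rt * (Rt * M) = Pi * M" by (rule rassoc[OF pt(4) Rtc Rtc])
  have PPi: "\<And>M k. M \<in> carrier_mat n k \<Longrightarrow> P * (Pi * M) = M"
    using rassoc[OF pt(6) Pc Pic] by simp
  have PiP: "\<And>M k. M \<in> carrier_mat n k \<Longrightarrow> Pi * (P * M) = M"
    using rassoc[OF pt(7) Pic Pc] by simp
  define W where "W = Rt * P * Rs"
  have Wc: "W \<in> carrier_mat n n" unfolding W_def using Rtc Pc Rsc by auto
  have aW: "mat_adjoint W = Rs * P * Rt"
  proof -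
    have "mat_adjoint W = mat_adjoint Rs * mat_adjoint (Rt * P)" unfolding W_def
      by (rule adj_mult, use Rtc Pc Rsc in auto)
    also have "mat_adjoint (Rt * P) = mat_adjoint P * mat_adjoint Rt" by (rule adj_mult, use Rtc Pc in auto)
    finally have "mat_adjoint W = Rs * (P * Rt)" using ps(3) pt(3) Ph by simp
    also have "\<dots> = Rs * P * Rt" by (rule assoc_mult_mat[symmetric, OF Rsc Pc Rtc])
    finally show ?thesis .
  qed
  have e1: "mat_adjoint W * Rt = Rs"
  proof -
    have "mat_adjoint W * Rt = Rs * P * (Rt * Rt)" unfolding aW by (rule assoc_mult_mat, use Rsc Pc Rtc in auto)
    also have "\<dots> = Rs * (P * Pi)" unfolding pt(4) Pi_def[symmetric] by (rule assoc_mult_mat, use Rsc Pc Pic in auto)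
    also have "\<dots> = Rs" using pt(6) Rsc unfolding Pi_def by simp
    finally show ?thesis .
  qed
  have e2: "Rt * W = Rs"
  proof -
    have "Rt * W = Rt * (Rt * (P * Rs))" unfolding W_def using assoc_mult_mat[OF Rtc Pc Rsc] by simp
    also have "\<dots> = (Rt * Rt) * (P * Rs)" by (rule assoc_mult_mat[symmetric], use Rsc Pc Rtc in auto)
    also have "\<dots> = (Pi * P) * Rs" unfolding pt(4) Pi_def[symmetric] by (rule assoc_mult_mat[symmetric], use Rsc Pc Pic in auto)
    also have "\<dots> = Rs" using pt(7) Rsc unfolding Pi_def by simp
    finally show ?thesis .
  qed
  have WW: "mat_adjoint W * W = mat_adjoint Rs * P * Rs"
  proof -
    have "mat_adjoint W * W = Rs * P * (Rt * W)" unfolding aW by (rule assoc_mult_mat, use Rsc Pc Rtc Wc in auto)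
    thus ?thesis unfolding e2 ps(3) .
  qed
  define B where "B = vmat_triple sc Rt A Rt"
  have Bsa: "B \<in> vmat_sa st n" unfolding B_def using tsa[OF A Rtc] pt(3) by simp
  have nB: "\<nu> n B \<le> 1" using nt unfolding B_def Rt_def .
  have "vmat_triple sc Rs A Rs = vmat_triple sc (mat_adjoint W * Rt) A (Rt * W)" unfolding e1 e2 ..
  also have "\<dots> = vmat_triple sc (mat_adjoint W) B W" unfolding B_def
    by (rule triple_comp[OF cs, symmetric], use Wc Rtc Ac in auto)
  finally have eT: "vmat_triple sc Rs A Rs = vmat_triple sc (mat_adjoint W) B W" .
  have opW: "(op_norm W)\<^sup>2 \<le> 1"
  proof (rule opn_le[OF Wc])
    fix v :: "complex vec" assume v: "v \<in> carrier_vec n"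
    have Rv: "Rs *\<^sub>v v \<in> carrier_vec n" using Rsc v by auto
    have "complex_of_real (nsq (W *\<^sub>v v)) = qf (mat_adjoint W * W) v" by (rule nsq_qf[OF Wc v])
    also have "\<dots> = qf P (Rs *\<^sub>v v)" unfolding WW by (rule qf_conj[OF Rsc Pc v])
    finally have a: "nsq (W *\<^sub>v v) = Re (qf P (Rs *\<^sub>v v))" by (metis Re_complex_of_real)
    have "qf Q (Rs *\<^sub>v v) = qf (mat_adjoint Rs * Q * Rs) v" by (rule qf_conj[symmetric, OF Rsc Qc v])
    also have "\<dots> = complex_of_real (nsq v)" using ps(3) ps(5) qf_one[OF v] by simp
    finally have b: "Re (qf Q (Rs *\<^sub>v v)) = nsq v" by simp
    have "0 \<le> (s - t) * nsq (Rs *\<^sub>v v)" using st nsq_nonneg[of "Rs *\<^sub>v v"] by simp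
    thus "nsq (W *\<^sub>v v) \<le> 1 * nsq v" using a b PQ[OF Rv] by linarith
  qed auto
  have "\<nu> n (vmat_triple sc Rs A Rs) \<le> (op_norm W)\<^sup>2 * \<nu> n B" unfolding eT by (rule compat[OF n n Bsa Wc])
  also have "\<dots> \<le> 1" using opW nB gnn[OF n Bsa] by (simp add: mult_le_one)
  finally have "\<nu> n (vmat_triple sc Rs A Rs) \<le> 1" .
  thus ?thesis unfolding unit_set_def Rs_def Q_def using Qpd Q_def t0 st by auto
qed

end


context
  fixes sc :: "complex \<Rightarrow> 'v::ab_group_add \<Rightarrow> 'v" and st :: "'v \<Rightarrow> 'v"
    and \<nu> :: "nat \<Rightarrow> 'v mat \<Rightarrow> real"
  assumes mos: "is_LinfMOS sc st \<nu>"
begin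

lemma nonempty: assumes n: "n \<ge> 1" and A: "A \<in> vmat_sa st n" and X: "X \<in> cmat_sa n"
  shows "unit_set sc \<nu> n A X \<noteq> {}"
proof -
  have Xc: "X \<in> carrier_mat n n" and Xh: "mat_adjoint X = X" using X unfolding cmat_sa_def by auto
  obtain c where c0: "c \<ge> 0" and cb: "\<And>v. v \<in> carrier_vec n \<Longrightarrow> Re (qf X v) \<le> c * nsq v"
    using qf_bound[OF Xc] by blast
  define a where "a = \<nu> n A"
  have a0: "a \<ge> 0" unfolding a_def by (rule gnn[OF mos n A])
  define t where "t = c + a + 1"
  define \<alpha> where "\<alpha> = a + 1"
  have al: "\<alpha> > 0" "t - c = \<alpha>" unfolding \<alpha>_def t_def using a0 by auto
  define P where "P = shiftm n t X"
  have Pc: "P \<in> carrier_mat n n" and Ph: "mat_adjoint P = P" unfolding P_def using Xc shift_adj[OF Xc Xh] by auto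
  have Pq: "\<And>v. v \<in> carrier_vec n \<Longrightarrow> \<alpha> * nsq v \<le> Re (qf P v)"
  proof -
    fix v :: "complex vec" assume v: "v \<in> carrier_vec n"
    have "Re (qf P v) = t * nsq v - Re (qf X v)" unfolding P_def by (rule Re_qf_shift[OF Xc v])
    thus "\<alpha> * nsq v \<le> Re (qf P v)" using cb[OF v] al by (simp add: algebra_simps)
  qed
  have Ppos: "cmat_pos n P"
  proof -
    have "\<forall>v\<in>carrier_vec n. 0 \<le> Re (qf P v)"
    proof
      fix v :: "complex vec" assume v: "v \<in> carrier_vec n"
      have "0 \<le> \<alpha> * nsq v" using al nsq_nonneg[of v] by simp
      thus "0 \<le> Re (qf P v)" using Pq[OF v] by linarith
    qed
    thus ?thesis unfolding cmat_pos_qf cmat_sa_def using Pc Ph by auto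
  qed
  have "invertible_mat P"
  proof (rule inv_kernel[OF Pc])
    fix v assume v: "v \<in> carrier_vec n" and Pv: "P *\<^sub>v v = 0\<^sub>v n"
    have "\<alpha> * nsq v \<le> 0" using Pq[OF v] qf_of_zero[OF v Pv] by simp
    hence "nsq v = 0" using al nsq_nonneg[of v] by (simp add: mult_le_0_iff)
    thus "v = 0\<^sub>v n" using nsq_zero[OF v] by simp
  qed
  hence Ppd: "cmat_pd n P" using Ppos unfolding cmat_pd_def by simp
  define R where "R = cmat_invsqrt n P"
  define Pi where "Pi = cmat_inv n P"
  note pr = invsqrt_props[OF Ppd, folded R_def Pi_def]
  have Rc: "R \<in> carrier_mat n n" and Pic: "Pi \<in> carrier_mat n n" using pr by auto
  have opR: "(op_norm R)\<^sup>2 \<le> 1 / \<alpha>"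
  proof (rule opn_le[OF Rc])
    fix v :: "complex vec" assume v: "v \<in> carrier_vec n"
    define w where "w = Pi *\<^sub>v v"
    have w: "w \<in> carrier_vec n" unfolding w_def using Pic v by auto
    have vw: "v = P *\<^sub>v w" unfolding w_def using assoc_mult_mat_vec[OF Pc Pic v] pr(6) v by simp
    have "complex_of_real (nsq (R *\<^sub>v v)) = qf (mat_adjoint R * R) v" by (rule nsq_qf[OF Rc v])
    also have "\<dots> = ip v w" unfolding pr(3) pr(4) qf_def w_def ..
    finally have e1: "complex_of_real (nsq (R *\<^sub>v v)) = ip v w" .
    have "ip v w = ip (P *\<^sub>v w) w" using vw by simp
    also have "\<dots> = ip w (mat_adjoint P *\<^sub>v w)" by (rule ip_adj[symmetric, OF Pc w w])
    also have "\<dots> = qf P w" unfolding qf_def Ph ..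
    finally have e2: "ip v w = qf P w" .
    define q where "q = Re (qf P w)"
    have qr: "qf P w = complex_of_real q" unfolding q_def by (rule qf_herm_real[OF Pc Ph w])
    have e3: "ip w v = complex_of_real q" using ip_cnj[OF v w] e2 qr by simp
    have "complex_of_real (nsq (v - complex_of_real \<alpha> \<cdot>\<^sub>v w)) =
      complex_of_real (nsq v) - complex_of_real \<alpha> * ip v w - complex_of_real \<alpha> * ip w v + complex_of_real (\<alpha> * \<alpha> * nsq w)"
      by (rule nsq_diff[OF v w])
    also have "\<dots> = complex_of_real (nsq v - 2 * \<alpha> * q + \<alpha> * \<alpha> * nsq w)" unfolding e2 qr e3 by simp
    finally have "nsq (v - complex_of_real \<alpha> \<cdot>\<^sub>v w) = nsq v - 2 * \<alpha> * q + \<alpha> * \<alpha> * nsq w"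
      by (simp only: of_real_eq_iff)
    hence f1: "0 \<le> nsq v - 2 * \<alpha> * q + \<alpha> * \<alpha> * nsq w" using nsq_nonneg[of "v - complex_of_real \<alpha> \<cdot>\<^sub>v w"] by simp
    have f2: "\<alpha> * nsq w \<le> q" using Pq[OF w] unfolding q_def .
    have "\<alpha> * (\<alpha> * nsq w) \<le> \<alpha> * q" using f2 al by (intro mult_left_mono) auto
    hence "\<alpha> * q \<le> nsq v" using f1 by (simp add: algebra_simps)
    hence "q \<le> nsq v / \<alpha>" using al by (simp add: field_simps)
    moreover have "nsq (R *\<^sub>v v) = q" using e1 e2 qr by simp
    ultimately show "nsq (R *\<^sub>v v) \<le> 1 / \<alpha> * nsq v" by simp
  qed (use al in auto)
  have "\<nu> n (vmat_triple sc (mat_adjoint R) A R) \<le> (op_norm R)\<^sup>2 * a"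
    unfolding a_def by (rule compat[OF mos n n A Rc])
  also have "\<dots> \<le> (1 / \<alpha>) * a" using opR a0 by (intro mult_right_mono) auto
  also have "\<dots> \<le> 1" using al a0 unfolding \<alpha>_def by (simp add: field_simps)
  finally have "\<nu> n (vmat_triple sc R A R) \<le> 1" using pr(3) by simp
  moreover have "t > 0" unfolding t_def using c0 a0 by simp
  ultimately have "t \<in> unit_set sc \<nu> n A X" unfolding unit_set_def R_def P_def using Ppd P_def by auto
  thus ?thesis by auto
qed

end


context
  fixes sc :: "complex \<Rightarrow> 'v::ab_group_add \<Rightarrow> 'v" and st :: "'v \<Rightarrow> 'v"
    and \<nu> :: "nat \<Rightarrow> 'v mat \<Rightarrow> real"
  assumes mos: "is_LinfMOS sc st \<nu>"
begin

lemma Zstep: assumes n: "n \<ge> 1" and k: "k \<ge> 1" and A: "A \<in> vmat_sa st n" and X: "X \<in> cmat_sa n"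
  and Z: "Z \<in> carrier_mat n k" and N0: "op_norm Z > 0" and t: "t \<in> unit_set sc \<nu> n A X"
  shows "(op_norm Z)\<^sup>2 * t \<in> unit_set sc \<nu> k (vmat_triple sc (mat_adjoint Z) A Z) (mat_adjoint Z * X * Z)"
proof -
  define N where "N = op_norm Z"
  define s where "s = N\<^sup>2 * t"
  have Xc: "X \<in> carrier_mat n n" and Xh: "mat_adjoint X = X" using X unfolding cmat_sa_def by auto
  have Ac: "A \<in> carrier_mat n n" using A unfolding vmat_sa_def by auto
  have aZ: "mat_adjoint Z \<in> carrier_mat k n" using Z by auto
  define P where "P = shiftm n t X"
  have t0: "t > 0" and Ppd: "cmat_pd n P"
    and nt: "\<nu> n (vmat_triple sc (cmat_invsqrt n P) A (cmat_invsqrt n P)) \<le> 1"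
    using t unfolding unit_set_def P_def by auto
  have s0: "s > 0" unfolding s_def N_def using N0 t0 by simp
  have Pc: "P \<in> carrier_mat n n" and Ph: "mat_adjoint P = P" unfolding P_def using Xc shift_adj[OF Xc Xh] by auto
  have Pq: "\<And>v. v \<in> carrier_vec n \<Longrightarrow> 0 \<le> Re (qf P v)" using Ppd unfolding cmat_pd_def cmat_pos_qf by auto
  define X' where "X' = mat_adjoint Z * X * Z"
  have X'c: "X' \<in> carrier_mat k k" unfolding X'_def using Z Xc by auto
  have X'h: "mat_adjoint X' = X'"
  proof -
    have "mat_adjoint X' = mat_adjoint Z * mat_adjoint (mat_adjoint Z * X)" unfolding X'_def
      by (rule adj_mult, use Z Xc in auto)
    also have "mat_adjoint (mat_adjoint Z * X) = mat_adjoint X * Z" using adj_mult[OF aZ Xc] by simp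
    also have "mat_adjoint Z * (mat_adjoint X * Z) = X'" unfolding X'_def Xh
      by (rule assoc_mult_mat[symmetric, OF aZ Xc Z])
    finally show ?thesis .
  qed
  define Q where "Q = shiftm k s X'"
  have Qc: "Q \<in> carrier_mat k k" and Qh: "mat_adjoint Q = Q" unfolding Q_def using X'c shift_adj[OF X'c X'h] by auto
  have dZ: "\<And>v. v \<in> carrier_vec k \<Longrightarrow> nsq (Z *\<^sub>v v) \<le> N\<^sup>2 * nsq v" unfolding N_def by (rule opn_vec[OF Z])
  have PQ: "\<And>v. v \<in> carrier_vec k \<Longrightarrow> Re (qf Q v) = Re (qf P (Z *\<^sub>v v)) + t * (N\<^sup>2 * nsq v - nsq (Z *\<^sub>v v))"
  proof -
    fix v :: "complex vec" assume v: "v \<in> carrier_vec k"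
    have Zv: "Z *\<^sub>v v \<in> carrier_vec n" using Z v by auto
    have "Re (qf Q v) = s * nsq v - Re (qf X' v)" unfolding Q_def by (rule Re_qf_shift[OF X'c v])
    also have "qf X' v = qf X (Z *\<^sub>v v)" unfolding X'_def by (rule qf_conj[OF Z Xc v])
    also have "Re (qf P (Z *\<^sub>v v)) = t * nsq (Z *\<^sub>v v) - Re (qf X (Z *\<^sub>v v))" unfolding P_def by (rule Re_qf_shift[OF Xc Zv])
    ultimately show "Re (qf Q v) = Re (qf P (Z *\<^sub>v v)) + t * (N\<^sup>2 * nsq v - nsq (Z *\<^sub>v v))"
      unfolding s_def by (simp add: algebra_simps)
  qed
  have PQle: "\<And>v. v \<in> carrier_vec k \<Longrightarrow> Re (qf P (Z *\<^sub>v v)) \<le> Re (qf Q v)"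
  proof -
    fix v :: "complex vec" assume v: "v \<in> carrier_vec k"
    have "0 \<le> t * (N\<^sup>2 * nsq v - nsq (Z *\<^sub>v v))" using dZ[OF v] t0 by simp
    thus "Re (qf P (Z *\<^sub>v v)) \<le> Re (qf Q v)" using PQ[OF v] by linarith
  qed
  have Qpos: "cmat_pos k Q"
  proof -
    have "\<forall>v\<in>carrier_vec k. 0 \<le> Re (qf Q v)"
    proof
      fix v :: "complex vec" assume v: "v \<in> carrier_vec k"
      have Zv: "Z *\<^sub>v v \<in> carrier_vec n" using Z v by auto
      show "0 \<le> Re (qf Q v)" using PQle[OF v] Pq[OF Zv] by linarith
    qed
    thus ?thesis unfolding cmat_pos_qf cmat_sa_def using Qc Qh by auto
  qed
  have "invertible_mat Q"
  proof (rule inv_kernel[OF Qc])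
    fix v assume v: "v \<in> carrier_vec k" and Qv: "Q *\<^sub>v v = 0\<^sub>v k"
    have Zv: "Z *\<^sub>v v \<in> carrier_vec n" using Z v by auto
    have q0: "Re (qf Q v) = 0" using qf_of_zero[OF v Qv] by simp
    have a1: "0 \<le> t * (N\<^sup>2 * nsq v - nsq (Z *\<^sub>v v))" using dZ[OF v] t0 by simp
    have a2: "0 \<le> Re (qf P (Z *\<^sub>v v))" using Pq[OF Zv] .
    have "Re (qf P (Z *\<^sub>v v)) = 0" using PQ[OF v] q0 a1 a2 by linarith
    hence "qf P (Z *\<^sub>v v) = 0" using qf_herm_real[OF Pc Ph Zv] by simp
    hence "Z *\<^sub>v v = 0\<^sub>v n" by (rule pd_qf_zero[OF Ppd Zv])
    hence "nsq (Z *\<^sub>v v) = 0" unfolding nsq_def by simp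
    hence s1: "Re (qf P (Z *\<^sub>v v)) + t * (N\<^sup>2 * nsq v) = 0" using PQ[OF v] q0 by simp
    have s2: "0 \<le> t * (N\<^sup>2 * nsq v)" using t0 nsq_nonneg[of v] by simp
    have "t * (N\<^sup>2 * nsq v) = 0" using s1 s2 a2 by linarith
    hence "nsq v = 0" using t0 N0 unfolding N_def by simp
    thus "v = 0\<^sub>v k" using nsq_zero[OF v] by simp
  qed
  hence Qpd: "cmat_pd k Q" using Qpos unfolding cmat_pd_def by simp
  define R where "R = cmat_invsqrt n P"
  define Pi where "Pi = cmat_inv n P"
  define R' where "R' = cmat_invsqrt k Q"
  note pr = invsqrt_props[OF Ppd, folded R_def Pi_def]
  note pr' = invsqrt_props[OF Qpd, folded R'_def]
  have Rc: "R \<in> carrier_mat n n" and Pic: "Pi \<in> carrier_mat n n" and R'c: "R' \<in> carrier_mat k k" using pr pr' by auto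
  define W where "W = R * (P * (Z * R'))"
  have ZR: "Z * R' \<in> carrier_mat n k" using Z R'c by auto
  have Wc: "W \<in> carrier_mat n k" unfolding W_def using Rc Pc ZR by auto
  have aZR: "mat_adjoint (Z * R') = R' * mat_adjoint Z" using adj_mult[OF Z R'c] pr'(3) by simp
  have aW: "mat_adjoint W = (R' * mat_adjoint Z) * P * R"
  proof -
    have "mat_adjoint W = mat_adjoint (P * (Z * R')) * mat_adjoint R" unfolding W_def
      by (rule adj_mult[OF Rc], use Pc ZR in auto)
    also have "mat_adjoint (P * (Z * R')) = mat_adjoint (Z * R') * mat_adjoint P" by (rule adj_mult[OF Pc ZR])
    finally show ?thesis unfolding aZR Ph pr(3) .
  qed
  have RZc: "R' * mat_adjoint Z \<in> carrier_mat k n" using R'c aZ by auto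
  have e1: "mat_adjoint W * R = R' * mat_adjoint Z"
  proof -
    have "mat_adjoint W * R = (R' * mat_adjoint Z) * P * (R * R)" unfolding aW
      by (rule assoc_mult_mat, use RZc Pc Rc in auto)
    also have "\<dots> = (R' * mat_adjoint Z) * (P * Pi)" unfolding pr(4)
      by (rule assoc_mult_mat, use RZc Pc Pic in auto)
    also have "\<dots> = R' * mat_adjoint Z" unfolding pr(6) using right_mult_one_mat[OF RZc] .
    finally show ?thesis .
  qed
  have e2: "R * W = Z * R'"
  proof -
    have "R * W = (R * R) * (P * (Z * R'))" unfolding W_def
      by (rule assoc_mult_mat[symmetric], use Rc Pc ZR in auto)
    also have "\<dots> = (Pi * P) * (Z * R')" unfolding pr(4)
      by (rule assoc_mult_mat[symmetric], use Pic Pc ZR in auto)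
    also have "\<dots> = Z * R'" unfolding pr(7) using left_mult_one_mat[OF ZR] .
    finally show ?thesis .
  qed
  have WW: "mat_adjoint W * W = mat_adjoint (Z * R') * P * (Z * R')"
  proof -
    have "mat_adjoint W * W = mat_adjoint W * R * (P * (Z * R'))" unfolding W_def
      by (rule assoc_mult_mat[symmetric], use Rc Pc ZR Wc in auto)
    also have "\<dots> = mat_adjoint (Z * R') * (P * (Z * R'))" unfolding e1 aZR ..
    also have "\<dots> = mat_adjoint (Z * R') * P * (Z * R')"
      by (rule assoc_mult_mat[symmetric, of _ k n], use Pc ZR in auto)
    finally show ?thesis .
  qed
  define B where "B = vmat_triple sc R A R"
  have Bsa: "B \<in> vmat_sa st n" unfolding B_def using tsa[OF mos A Rc] pr(3) by simp
  have nB: "\<nu> n B \<le> 1" using nt unfolding B_def R_def .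
  have "vmat_triple sc R' (vmat_triple sc (mat_adjoint Z) A Z) R' = vmat_triple sc (R' * mat_adjoint Z) A (Z * R')"
    by (rule triple_comp[OF cs[OF mos]], use R'c aZ Ac Z in auto)
  also have "\<dots> = vmat_triple sc (mat_adjoint W * R) A (R * W)" unfolding e1 e2 ..
  also have "\<dots> = vmat_triple sc (mat_adjoint W) B W" unfolding B_def
    by (rule triple_comp[OF cs[OF mos], symmetric], use Wc Rc Ac in auto)
  finally have eT: "vmat_triple sc R' (vmat_triple sc (mat_adjoint Z) A Z) R' = vmat_triple sc (mat_adjoint W) B W" .
  have opW: "(op_norm W)\<^sup>2 \<le> 1"
  proof (rule opn_le[OF Wc])
    fix v :: "complex vec" assume v: "v \<in> carrier_vec k"
    have Rv: "R' *\<^sub>v v \<in> carrier_vec k" using R'c v by auto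
    have "complex_of_real (nsq (W *\<^sub>v v)) = qf (mat_adjoint W * W) v" by (rule nsq_qf[OF Wc v])
    also have "\<dots> = qf P ((Z * R') *\<^sub>v v)" unfolding WW by (rule qf_conj[OF ZR Pc v])
    also have "(Z * R') *\<^sub>v v = Z *\<^sub>v (R' *\<^sub>v v)" by (rule assoc_mult_mat_vec[OF Z R'c v])
    finally have a: "nsq (W *\<^sub>v v) = Re (qf P (Z *\<^sub>v (R' *\<^sub>v v)))" by (metis Re_complex_of_real)
    have "qf Q (R' *\<^sub>v v) = qf (mat_adjoint R' * Q * R') v" by (rule qf_conj[symmetric, OF R'c Qc v])
    also have "\<dots> = complex_of_real (nsq v)" using pr'(3) pr'(5) qf_one[OF v] by simp
    finally have b: "Re (qf Q (R' *\<^sub>v v)) = nsq v" by simp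
    show "nsq (W *\<^sub>v v) \<le> 1 * nsq v" using a b PQle[OF Rv] by simp
  qed auto
  have "\<nu> k (vmat_triple sc R' (vmat_triple sc (mat_adjoint Z) A Z) R') \<le> (op_norm W)\<^sup>2 * \<nu> n B"
    unfolding eT by (rule compat[OF mos n k Bsa Wc])
  also have "\<dots> \<le> 1" using opW nB gnn[OF mos n Bsa] by (simp add: mult_le_one)
  finally have "\<nu> k (vmat_triple sc R' (vmat_triple sc (mat_adjoint Z) A Z) R') \<le> 1" .
  thus ?thesis unfolding unit_set_def R'_def Q_def X'_def s_def[symmetric] N_def[symmetric]
    using Qpd Q_def X'_def s0 by auto
qed

end


lemma unit_set_pos: "t \<in> unit_set sc \<nu> n A X \<Longrightarrow> t > 0" unfolding unit_set_def by auto

lemma unit_set_bdd: "bdd_below (unit_set sc \<nu> n A X)"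
  by (rule bdd_belowI[of _ 0]) (auto dest: unit_set_pos)

lemma inf_inter:
  fixes S1 S2 :: "real set"
  assumes ne1: "S1 \<noteq> {}" and ne2: "S2 \<noteq> {}" and b1: "bdd_below S1" and b2: "bdd_below S2"
    and u1: "\<And>t s. t \<in> S1 \<Longrightarrow> t \<le> s \<Longrightarrow> s \<in> S1" and u2: "\<And>t s. t \<in> S2 \<Longrightarrow> t \<le> s \<Longrightarrow> s \<in> S2"
  shows "Inf (S1 \<inter> S2) = max (Inf S1) (Inf S2)"
proof -
  obtain t1 t2 where t1: "t1 \<in> S1" and t2: "t2 \<in> S2" using ne1 ne2 by auto
  have ne: "S1 \<inter> S2 \<noteq> {}" using u1[OF t1, of "max t1 t2"] u2[OF t2, of "max t1 t2"] by auto
  have b: "bdd_below (S1 \<inter> S2)" using b1 by (meson bdd_below_mono inf_le1)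
  have ge: "max (Inf S1) (Inf S2) \<le> Inf (S1 \<inter> S2)"
  proof (rule cInf_greatest[OF ne])
    fix x assume "x \<in> S1 \<inter> S2"
    thus "max (Inf S1) (Inf S2) \<le> x" using cInf_lower[OF _ b1, of x] cInf_lower[OF _ b2, of x] by auto
  qed
  have le: "Inf (S1 \<inter> S2) \<le> max (Inf S1) (Inf S2)"
  proof (rule ccontr)
    assume "\<not> ?thesis"
    hence gt: "max (Inf S1) (Inf S2) < Inf (S1 \<inter> S2)" by linarith
    define e where "e = Inf (S1 \<inter> S2) - max (Inf S1) (Inf S2)"
    have e: "e > 0" unfolding e_def using gt by simp
    obtain s1 where s1: "s1 \<in> S1" "s1 < Inf S1 + e" using cInf_less_iff[OF ne1 b1, of "Inf S1 + e"] e by auto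
    obtain s2 where s2: "s2 \<in> S2" "s2 < Inf S2 + e" using cInf_less_iff[OF ne2 b2, of "Inf S2 + e"] e by auto
    have "max s1 s2 \<in> S1 \<inter> S2" using u1[OF s1(1)] u2[OF s2(1)] by auto
    hence "Inf (S1 \<inter> S2) \<le> max s1 s2" by (rule cInf_lower[OF _ b])
    moreover have "max s1 s2 < Inf (S1 \<inter> S2)" using s1 s2 unfolding e_def by auto
    ultimately show False by simp
  qed
  show ?thesis using ge le by (intro antisym)
qed

context
  fixes sc :: "complex \<Rightarrow> 'v::ab_group_add \<Rightarrow> 'v" and st :: "'v \<Rightarrow> 'v"
    and \<nu> :: "nat \<Rightarrow> 'v mat \<Rightarrow> real"
  assumes mos: "is_LinfMOS sc st \<nu>"
begin

lemma Zzero: assumes k: "k \<ge> 1" and A: "A \<in> vmat_sa st n" and X: "X \<in> cmat_sa n"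
  and Z: "Z = 0\<^sub>m n k" and s0: "s > 0"
  shows "s \<in> unit_set sc \<nu> k (vmat_triple sc (mat_adjoint Z) A Z) (mat_adjoint Z * X * Z)"
proof -
  have Xc: "X \<in> carrier_mat n n" using X unfolding cmat_sa_def by auto
  have Ac: "A \<in> carrier_mat n n" using A unfolding vmat_sa_def by auto
  have e1: "mat_adjoint Z * X * Z = 0\<^sub>m k k" unfolding Z using Xc by (intro eq_matI) (auto simp: scalar_prod_def)
  have e2: "vmat_triple sc (mat_adjoint Z) A Z = 0\<^sub>m k k" unfolding Z using Ac
    by (intro eq_matI) (auto simp: vmat_triple_def sc_zero2[OF cs[OF mos]])
  define Q where "Q = shiftm k s (0\<^sub>m k k)"
  have Qc: "Q \<in> carrier_mat k k" and Qh: "mat_adjoint Q = Q" unfolding Q_def using shift_adj[of "0\<^sub>m k k" k s] by auto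
  have Qq: "\<And>v. v \<in> carrier_vec k \<Longrightarrow> Re (qf Q v) = s * nsq v"
    unfolding Q_def using Re_qf_shift[of "0\<^sub>m k k" k] by (simp add: qf_def ip_def mult_zero_vec'[of "0\<^sub>m k k" k k])
  have Qpos: "cmat_pos k Q" unfolding cmat_pos_qf cmat_sa_def using Qc Qh Qq s0 nsq_nonneg by auto
  have "invertible_mat Q"
  proof (rule inv_kernel[OF Qc])
    fix v assume v: "v \<in> carrier_vec k" and Qv: "Q *\<^sub>v v = 0\<^sub>v k"
    have "s * nsq v = 0" using Qq[OF v] qf_of_zero[OF v Qv] by simp
    hence "nsq v = 0" using s0 by simp
    thus "v = 0\<^sub>v k" using nsq_zero[OF v] by simp
  qed
  hence Qpd: "cmat_pd k Q" using Qpos unfolding cmat_pd_def by simp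
  have "vmat_triple sc (cmat_invsqrt k Q) (0\<^sub>m k k) (cmat_invsqrt k Q) = 0\<^sub>m k k"
    using triple_zero[OF cs[OF mos]] invsqrt_props(2)[OF Qpd] by auto
  hence "\<nu> k (vmat_triple sc (cmat_invsqrt k Q) (0\<^sub>m k k) (cmat_invsqrt k Q)) \<le> 1" using nu0[OF mos k] by simp
  thus ?thesis unfolding unit_set_def e1 e2 using Qpd s0 Q_def by auto
qed

lemma dsum_set: assumes n: "n \<ge> 1" and k: "k \<ge> 1" and A: "A \<in> vmat_sa st n" and B: "B \<in> vmat_sa st k"
  and X: "X \<in> cmat_sa n" and Y: "Y \<in> cmat_sa k"
  shows "unit_set sc \<nu> (n+k) (direct_sum A B) (direct_sum X Y) = unit_set sc \<nu> n A X \<inter> unit_set sc \<nu> k B Y"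
proof -
  have Xc: "X \<in> carrier_mat n n" and Yc: "Y \<in> carrier_mat k k" using X Y unfolding cmat_sa_def by auto
  have Ac: "A \<in> carrier_mat n n" and Bc: "B \<in> carrier_mat k k" using A B unfolding vmat_sa_def by auto
  have key: "\<And>t. cmat_pd n (shiftm n t X) \<Longrightarrow> cmat_pd k (shiftm k t Y) \<Longrightarrow>
    \<nu> (n+k) (vmat_triple sc (cmat_invsqrt (n+k) (shiftm (n+k) t (direct_sum X Y))) (direct_sum A B)
        (cmat_invsqrt (n+k) (shiftm (n+k) t (direct_sum X Y))))
    = max (\<nu> n (vmat_triple sc (cmat_invsqrt n (shiftm n t X)) A (cmat_invsqrt n (shiftm n t X))))
          (\<nu> k (vmat_triple sc (cmat_invsqrt k (shiftm k t Y)) B (cmat_invsqrt k (shiftm k t Y))))"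
  proof -
    fix t assume p1: "cmat_pd n (shiftm n t X)" and p2: "cmat_pd k (shiftm k t Y)"
    define R1 where "R1 = cmat_invsqrt n (shiftm n t X)"
    define R2 where "R2 = cmat_invsqrt k (shiftm k t Y)"
    note r1 = invsqrt_props[OF p1, folded R1_def] and r2 = invsqrt_props[OF p2, folded R2_def]
    have R1c: "R1 \<in> carrier_mat n n" and R2c: "R2 \<in> carrier_mat k k" using r1 r2 by auto
    have "cmat_invsqrt (n+k) (shiftm (n+k) t (direct_sum X Y)) = direct_sum R1 R2"
      unfolding shift_dsum[OF Xc Yc] R1_def R2_def by (rule invsqrt_dsum[OF p1 p2])
    moreover have "vmat_triple sc (direct_sum R1 R2) (direct_sum A B) (direct_sum R1 R2)
       = direct_sum (vmat_triple sc R1 A R1) (vmat_triple sc R2 B R2)"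
      by (rule triple_dsum[OF cs[OF mos] R1c R2c Ac Bc R1c R2c])
    moreover have "vmat_triple sc R1 A R1 \<in> vmat_sa st n" using tsa[OF mos A R1c] r1(3) by simp
    moreover have "vmat_triple sc R2 B R2 \<in> vmat_sa st k" using tsa[OF mos B R2c] r2(3) by simp
    ultimately show "?thesis t" unfolding R1_def[symmetric] R2_def[symmetric] using dsax[OF mos n k] by simp
  qed
  have pd: "\<And>t. cmat_pd (n+k) (shiftm (n+k) t (direct_sum X Y)) \<longleftrightarrow> cmat_pd n (shiftm n t X) \<and> cmat_pd k (shiftm k t Y)"
    unfolding shift_dsum[OF Xc Yc] using pd_dsum Xc Yc by auto
  show ?thesis
  proof (rule Set.set_eqI)
    fix t
    show "t \<in> unit_set sc \<nu> (n+k) (direct_sum A B) (direct_sum X Y) \<longleftrightarrow> t \<in> unit_set sc \<nu> n A X \<inter> unit_set sc \<nu> k B Y"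
      unfolding unit_set_def using pd[of t] key[of t] by auto
  qed
qed

end


theorem lemma3p8:
  fixes sc :: "complex \<Rightarrow> 'v::ab_group_add \<Rightarrow> 'v" and st :: "'v \<Rightarrow> 'v"
    and \<nu> :: "nat \<Rightarrow> 'v mat \<Rightarrow> real" and n k :: nat
    and A B :: "'v mat" and X Y Z :: "complex mat"
  assumes "is_LinfMOS sc st \<nu>"
    and "n \<ge> 1" and "k \<ge> 1"
    and "A \<in> vmat_sa st n" and "X \<in> cmat_sa n"
    and "B \<in> vmat_sa st k" and "Y \<in> cmat_sa k"
    and "Z \<in> carrier_mat n k"
  shows "unit_set sc \<nu> n A X \<noteq> {}
    \<and> 0 \<le> unit_gauge sc \<nu> n A X
    \<and> unit_gauge sc \<nu> (n + k) (direct_sum A B) (direct_sum X Y)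
           = max (unit_gauge sc \<nu> n A X) (unit_gauge sc \<nu> k B Y)
    \<and> unit_gauge sc \<nu> k (vmat_triple sc (mat_adjoint Z) A Z) (mat_adjoint Z * X * Z)
           \<le> (op_norm Z)\<^sup>2 * unit_gauge sc \<nu> n A X"
proof -
  note mos = assms(1) and n = assms(2) and k = assms(3) and A = assms(4) and X = assms(5)
    and B = assms(6) and Y = assms(7) and Z = assms(8)
  define S where "S = unit_set sc \<nu> n A X"
  define S2 where "S2 = unit_set sc \<nu> k B Y"
  have ne: "S \<noteq> {}" unfolding S_def by (rule nonempty[OF mos n A X])
  have ne2: "S2 \<noteq> {}" unfolding S2_def by (rule nonempty[OF mos k B Y])
  have g0: "0 \<le> Inf S"
    by (rule cInf_greatest[OF ne]) (auto simp: S_def dest: unit_set_pos)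
  have ds: "unit_gauge sc \<nu> (n + k) (direct_sum A B) (direct_sum X Y) = max (Inf S) (Inf S2)"
    unfolding unit_gauge_def dsum_set[OF mos n k A B X Y] S_def S2_def
    by (rule inf_inter[OF ne[unfolded S_def] ne2[unfolded S2_def] unit_set_bdd unit_set_bdd
          up_closed[OF mos n A X] up_closed[OF mos k B Y]])
  define S' where "S' = unit_set sc \<nu> k (vmat_triple sc (mat_adjoint Z) A Z) (mat_adjoint Z * X * Z)"
  have b': "bdd_below S'" unfolding S'_def by (rule unit_set_bdd)
  have zz: "Inf S' \<le> (op_norm Z)\<^sup>2 * Inf S"
  proof (cases "op_norm Z = 0")
    case True
    hence Z0: "Z = 0\<^sub>m n k" by (rule opn_zero[OF Z])
    have allS: "\<And>s. s > 0 \<Longrightarrow> s \<in> S'" unfolding S'_def by (rule Zzero[OF mos k A X Z0])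
    have "Inf S' \<le> 0"
    proof (rule ccontr)
      assume "\<not> Inf S' \<le> 0"
      hence p: "Inf S' > 0" by simp
      hence "Inf S' / 2 \<in> S'" using allS by simp
      hence "Inf S' \<le> Inf S' / 2" by (rule cInf_lower[OF _ b'])
      thus False using p by simp
    qed
    thus ?thesis using True by simp
  next
    case False
    hence N0: "op_norm Z > 0" using opn_nonneg[OF Z] by simp
    have "\<And>t. t \<in> S \<Longrightarrow> Inf S' / (op_norm Z)\<^sup>2 \<le> t"
    proof -
      fix t assume t: "t \<in> S"
      have "(op_norm Z)\<^sup>2 * t \<in> S'" unfolding S'_def using Zstep[OF mos n k A X Z N0] t unfolding S_def by blast
      hence "Inf S' \<le> (op_norm Z)\<^sup>2 * t" by (rule cInf_lower[OF _ b'])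
      thus "Inf S' / (op_norm Z)\<^sup>2 \<le> t" using N0 by (simp add: divide_le_eq mult.commute)
    qed
    hence "Inf S' / (op_norm Z)\<^sup>2 \<le> Inf S" by (intro cInf_greatest[OF ne]) auto
    thus ?thesis using N0 by (simp add: divide_le_eq mult.commute)
  qed
  show ?thesis using ne g0 ds zz unfolding unit_gauge_def S_def S2_def S'_def by auto
qed


end
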